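(* Let $Q$ be a quantum circuit acting on $w$ qubits and let $N\ge 64$ be a power of two; set $l=\log_2 N+1$. Let $R_1^{(N)}$ be the circuit with registers: an $l$-qubit counter register $\mathsf{C}$ whose first qubit $\mathsf{C}^{(1)}$ is the first qubit of the whole circuit and holds the most significant bit, a single-qubit register $\mathsf{Q}$, and for each $j\in\{1,\dots,2N\}$ a $(w-1)$-qubit register $\mathsf{R}_j$ and a single-qubit register $\mathsf{X}_j$; it performs, for $j=1,\dots,2N$ in turn: apply $Q$ to $(\mathsf{Q},\mathsf{R}_j)$ (with $\mathsf{Q}$ as $Q$'s first qubit), apply CNOT with control $\mathsf{Q}$ and target $\mathsf{X}_j$, and apply the controlled-$U_{+1}^{(2N)}$ with control $\mathsf{Q}$ and target $\mathsf{C}$, where $U^{(2N)}_{+1}|j\rangle=|(j+1)\bmod 2N\rangle$; its output qubit is $\mathsf{C}^{(1)}$. Suppose $\frac12-\varepsilon\le p_{\mathrm{acc}}(Q,1)\le\frac12+\varepsilon$ for some $\varepsilon\in[0,\frac18]$ with $3N^{-1/3}+4\varepsilon\le 1$. Then \[p_{\mathrm{acc}}(R_1^{(N)},1)<3N^{-1/3}+4\varepsilon.\]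
   Context: For a circuit $Q$ on $w$ qubits and $1\le k\le w$, $p_{\mathrm{acc}}(Q,k)=\mathrm{tr}\,\Pi_{\mathrm{acc}}Q\rho^{(w,k)}_{\mathrm{init}}Q^\dagger$, where $\rho^{(w,k)}_{\mathrm{init}}=(|0\rangle\langle0|)^{\otimes k}\otimes(I/2)^{\otimes(w-k)}$ and $\Pi_{\mathrm{acc}}=|0\rangle\langle0|\otimes I^{\otimes(w-1)}$; i.e., the first $k$ qubits start in $|0\rangle$, the remaining qubits are maximally mixed, and acceptance means the first qubit is measured as $0$ in the computational basis. For $R_1^{(N)}$, only $\mathsf{C}^{(1)}$ is clean; all other qubits start maximally mixed. The counter register $\mathsf{C}$ encodes an integer in $\{0,\dots,2N-1\}$ in binary. *)

theory Defs
  imports Complex_Main "Jordan_Normal_Form.Matrix" "Jordan_Normal_Form.Conjugate"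
begin

definition adj :: "complex mat \<Rightarrow> complex mat" where
  "adj A = mat (dim_col A) (dim_row A) (\<lambda>(i,j). cnj (A $$ (j,i)))"

definition mtrace :: "complex mat \<Rightarrow> complex" where
  "mtrace A = (\<Sum>i<dim_row A. A $$ (i,i))"

definition unitary_mat :: "complex mat \<Rightarrow> bool" where
  "unitary_mat U \<longleftrightarrow> U * adj U = 1\<^sub>m (dim_row U) \<and> adj U * U = 1\<^sub>m (dim_col U)"

text \<open>Computational basis of n qubits: basis index i < 2^n; the qubit at position p
  (p = 0 is the first qubit) is the bit of weight 2^(n-1-p), i.e. the first qubit is the
  most significant bit.\<close>
definition qbit :: "nat \<Rightarrow> nat \<Rightarrow> nat \<Rightarrow> nat" where
  "qbit n p i = (i div 2 ^ (n - 1 - p)) mod 2"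

definition sub_index :: "nat \<Rightarrow> nat list \<Rightarrow> nat \<Rightarrow> nat" where
  "sub_index n ps i = (\<Sum>t<length ps. qbit n (ps ! t) i * 2 ^ (length ps - 1 - t))"

definition embed :: "nat \<Rightarrow> nat list \<Rightarrow> complex mat \<Rightarrow> complex mat" where
  "embed n ps G = mat (2 ^ n) (2 ^ n) (\<lambda>(i,j).
     if (\<forall>p<n. p \<notin> set ps \<longrightarrow> qbit n p i = qbit n p j)
     then G $$ (sub_index n ps i, sub_index n ps j) else 0)"

definition perm_mat :: "nat \<Rightarrow> (nat \<Rightarrow> nat) \<Rightarrow> complex mat" where
  "perm_mat d f = mat d d (\<lambda>(a,b). if a = f b then 1 else 0)"

text \<open>CNOT on two qubits, control = first qubit.\<close>
definition CNOT :: "complex mat" where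
  "CNOT = perm_mat 4 (\<lambda>b. if b div 2 = 1 then 2 + (1 - b mod 2) else b)"

text \<open>Controlled U_{+1}^{(2^l)} on 1 + l qubits: control = first qubit, target = the
  remaining l qubits encoding j in {0..2^l-1}, mapped to (j+1) mod 2^l.\<close>
definition C_inc :: "nat \<Rightarrow> complex mat" where
  "C_inc l = perm_mat (2 ^ (l + 1))
     (\<lambda>b. if b div 2 ^ l = 1 then 2 ^ l + (b mod 2 ^ l + 1) mod 2 ^ l else b)"

definition rho_init :: "nat \<Rightarrow> nat \<Rightarrow> complex mat" where
  "rho_init n k = mat (2 ^ n) (2 ^ n)
     (\<lambda>(i,j). if i = j \<and> i div 2 ^ (n - k) = 0 then 1 / 2 ^ (n - k) else 0)"

definition Pi_acc :: "nat \<Rightarrow> complex mat" where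
  "Pi_acc n = mat (2 ^ n) (2 ^ n) (\<lambda>(i,j). if i = j \<and> qbit n 0 i = 0 then 1 else 0)"

definition p_acc :: "nat \<Rightarrow> complex mat \<Rightarrow> nat \<Rightarrow> real" where
  "p_acc n U k = Re (mtrace (Pi_acc n * U * rho_init n k * adj U))"

text \<open>Parameters: w = number of qubits of Q, N, l = number of counter qubits (2N = 2^l).
  Layout: positions 0..l-1 = counter C (position 0 = C^(1), most significant),
  position l = Q, then for j = 1..2N: w-1 qubits R_j followed by one qubit X_j.\<close>
definition R1_qubits :: "nat \<Rightarrow> nat \<Rightarrow> nat \<Rightarrow> nat" where
  "R1_qubits w N l = l + 1 + 2 * N * w"

definition R_reg :: "nat \<Rightarrow> nat \<Rightarrow> nat \<Rightarrow> nat list" where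
  "R_reg w l j = [l + 1 + (j - 1) * w ..< l + 1 + (j - 1) * w + (w - 1)]"

definition X_pos :: "nat \<Rightarrow> nat \<Rightarrow> nat \<Rightarrow> nat" where
  "X_pos w l j = l + 1 + (j - 1) * w + (w - 1)"

definition R1_step :: "nat \<Rightarrow> nat \<Rightarrow> nat \<Rightarrow> complex mat \<Rightarrow> nat \<Rightarrow> complex mat" where
  "R1_step w N l Q j =
     embed (R1_qubits w N l) (l # [0..<l]) (C_inc l)
   * embed (R1_qubits w N l) [l, X_pos w l j] CNOT
   * embed (R1_qubits w N l) (l # R_reg w l j) Q"

fun R1_upto :: "nat \<Rightarrow> nat \<Rightarrow> nat \<Rightarrow> complex mat \<Rightarrow> nat \<Rightarrow> complex mat" where
  "R1_upto w N l Q 0 = 1\<^sub>m (2 ^ R1_qubits w N l)"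
| "R1_upto w N l Q (Suc j) = R1_step w N l Q (Suc j) * R1_upto w N l Q j"

definition R1 :: "nat \<Rightarrow> nat \<Rightarrow> nat \<Rightarrow> complex mat \<Rightarrow> complex mat" where
  "R1 w N l Q = R1_upto w N l Q (2 * N)"

end

theory Submission
  imports Defs
begin


fun mk :: "nat \<Rightarrow> (nat \<Rightarrow> nat) \<Rightarrow> nat" where
  "mk 0 b = 0" | "mk (Suc L) b = 2 * mk L b + b L"

lemma qbit_lt2[simp]: "qbit n p i < 2"
  by (simp add: qbit_def)

lemma mk_less: "(\<forall>p<L. b p < 2) \<Longrightarrow> mk L b < 2^L"
  by (induction L) auto

lemma mk_cong: "(\<forall>p<L. b p = b' p) \<Longrightarrow> mk L b = mk L b'"
  by (induction L) auto

lemma qbit_Suc_low: "p < L \<Longrightarrow> y < 2 \<Longrightarrow> qbit (Suc L) p (2 * x + y) = qbit L p x"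
proof -
  assume a: "p < L" "y < 2"
  have "Suc L - 1 - p = Suc (L - 1 - p)" using a by auto
  hence "qbit (Suc L) p (2 * x + y) = ((2*x+y) div 2 div 2^(L-1-p)) mod 2"
    unfolding qbit_def by (simp add: div_mult2_eq)
  also have "(2*x+y) div 2 = x" using a by auto
  finally show ?thesis by (simp add: qbit_def)
qed

lemma qbit_Suc_top: "y < 2 \<Longrightarrow> qbit (Suc L) L (2 * x + y) = y"
  by (simp add: qbit_def)

lemma qbit_mk: "(\<forall>p<L. b p < 2) \<Longrightarrow> p < L \<Longrightarrow> qbit L p (mk L b) = b p"
proof (induction L arbitrary: p)
  case 0 then show ?case by simp
next
  case (Suc L)
  show ?case
  proof (cases "p = L")
    case True then show ?thesis using Suc by (simp add: qbit_Suc_top)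
  next
    case False then have "p < L" using Suc by simp
    then show ?thesis using Suc by (simp add: qbit_Suc_low)
  qed
qed

lemma qbit_Suc_div2: "p < L \<Longrightarrow> qbit (Suc L) p v = qbit L p (v div 2)"
proof -
  assume a: "p < L"
  have "Suc L - 1 - p = Suc (L - 1 - p)" using a by auto
  thus ?thesis unfolding qbit_def by (simp add: div_mult2_eq)
qed

lemma mk_qbit: "v < 2^L \<Longrightarrow> mk L (\<lambda>p. qbit L p v) = v"
proof (induction L arbitrary: v)
  case 0 then show ?case by simp
next
  case (Suc L)
  have "mk L (\<lambda>p. qbit (Suc L) p v) = mk L (\<lambda>p. qbit L p (v div 2))"
    by (rule mk_cong) (simp add: qbit_Suc_div2)
  also have "\<dots> = v div 2" using Suc by simp
  finally show ?case by (simp add: qbit_def)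
qed

lemma mk_sum: "mk L b = (\<Sum>t<L. b t * 2^(L-1-t))"
proof (induction L)
  case 0 then show ?case by simp
next
  case (Suc L)
  have "2 * (\<Sum>t<L. b t * 2^(L-1-t)) = (\<Sum>t<L. b t * 2^(Suc L-1-t))"
    by (simp add: sum_distrib_left) (rule sum.cong, auto simp: Suc_diff_Suc power_Suc[symmetric] simp del: power_Suc)
  thus ?case using Suc by simp
qed

lemma sub_index_mk: "sub_index n ps i = mk (length ps) (\<lambda>t. qbit n (ps!t) i)"
  by (simp add: sub_index_def mk_sum)

lemma qbit_eq: "i < 2^n \<Longrightarrow> j < 2^n \<Longrightarrow> (\<forall>p<n. qbit n p i = qbit n p j) \<Longrightarrow> i = j"
  by (metis mk_cong mk_qbit)

lemma mk_Cons: "mk (Suc L) b = b 0 * 2^L + mk L (\<lambda>t. b (Suc t))"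
  by (induction L arbitrary: b) (auto simp: algebra_simps)

lemma sub_index_less: "sub_index n ps i < 2^length ps"
  by (simp add: sub_index_mk mk_less)

lemma qbit_sub: "t < length ps \<Longrightarrow> qbit (length ps) t (sub_index n ps i) = qbit n (ps!t) i"
  by (simp add: sub_index_mk qbit_mk)

lemma sub_index_Cons: "sub_index n (p # ps) i = qbit n p i * 2^length ps + sub_index n ps i"
  unfolding sub_index_mk length_Cons mk_Cons by simp



lemma embed_carrier[simp]: "embed n ps G \<in> carrier_mat (2^n) (2^n)"
  by (simp add: embed_def)

lemma embed_entry: "i < 2^n \<Longrightarrow> j < 2^n \<Longrightarrow> embed n ps G $$ (i,j) =
   (if (\<forall>p<n. p \<notin> set ps \<longrightarrow> qbit n p i = qbit n p j)
    then G $$ (sub_index n ps i, sub_index n ps j) else 0)"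
  by (simp add: embed_def)

lemma mult_entry: "A \<in> carrier_mat d d \<Longrightarrow> B \<in> carrier_mat d d \<Longrightarrow> i < d \<Longrightarrow> j < d \<Longrightarrow>
  (A * B) $$ (i,j) = (\<Sum>k<d. A $$ (i,k) * B $$ (k,j))"
  by (simp add: index_mult_mat scalar_prod_def lessThan_atLeast0)

lemma perm_collapse:
  fixes A B :: "complex mat"
  assumes "A \<in> carrier_mat d d" "B \<in> carrier_mat d d" "x < d" "i < d" "\<sigma> x < d"
    and "\<And>m. m < d \<Longrightarrow> A $$ (x,m) = (if m = \<sigma> x then 1 else 0)"
  shows "(A * B) $$ (x,i) = B $$ (\<sigma> x, i)"
proof -
  have "(A * B) $$ (x,i) = (\<Sum>k<d. A $$ (x,k) * B $$ (k,i))"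
    using assms by (intro mult_entry) auto
  also have "\<dots> = (\<Sum>k<d. (if k = \<sigma> x then B $$ (k,i) else 0))"
    using assms by (intro sum.cong) auto
  also have "\<dots> = B $$ (\<sigma> x, i)" using assms by simp
  finally show ?thesis .
qed

lemma sum_collapse1:
  fixes F :: "nat \<Rightarrow> 'a::comm_monoid_add"
  assumes "k0 < d" "\<And>k. k < d \<Longrightarrow> k \<noteq> k0 \<Longrightarrow> F k = 0"
  shows "(\<Sum>k<d. F k) = F k0"
proof -
  have "(\<Sum>k<d. F k) = (\<Sum>k<d. if k = k0 then F k else 0)"
    using assms by (intro sum.cong) auto
  also have "\<dots> = F k0" using assms by simp
  finally show ?thesis .
qed

lemma cmod_sq': "cmod z * cmod z = Re z * Re z + Im z * Im z"
  using cmod_power2[of z] by (simp add: power2_eq_square)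

lemma re_mult_cnj: "Re (z / (2^k) * cnj z) = (cmod z)^2 / 2^k"
  by (simp add: power2_eq_square cmod_sq' add_divide_distrib)

lemma p_acc_formula:
  assumes U: "U \<in> carrier_mat (2^n) (2^n)" and n: "n \<ge> 1"
  shows "p_acc n U 1 = (\<Sum>i<2^(n-1). \<Sum>x<2^n.
            if qbit n 0 x = 0 then (cmod (U $$ (x,i)))^2 else 0) / 2^(n-1)"
proof -
  define d where "d = (2::nat)^n"
  have dpos: "2^(n-1) \<le> d" unfolding d_def by simp
  have Pi: "Pi_acc n \<in> carrier_mat d d" by (simp add: Pi_acc_def d_def)
  have rho: "rho_init n 1 \<in> carrier_mat d d" by (simp add: rho_init_def d_def)
  have Ud: "U \<in> carrier_mat d d" using U by (simp add: d_def)
  have adjU: "adj U \<in> carrier_mat d d" using Ud by (simp add: adj_def)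
  have PU: "\<And>a b. a < d \<Longrightarrow> b < d \<Longrightarrow> (Pi_acc n * U) $$ (a,b) =
      (if qbit n 0 a = 0 then U $$ (a,b) else 0)"
  proof -
    fix a b assume ab: "a < d" "b < d"
    have "(Pi_acc n * U) $$ (a,b) = (\<Sum>k<d. Pi_acc n $$ (a,k) * U $$ (k,b))"
      using ab Pi Ud by (intro mult_entry) auto
    also have "\<dots> = (\<Sum>k<d. (if k = a then (if qbit n 0 a = 0 then U $$ (k,b) else 0) else 0))"
      using ab by (intro sum.cong) (auto simp: Pi_acc_def d_def)
    finally have "(Pi_acc n * U) $$ (a,b) = (\<Sum>k<d. (if k = a then (if qbit n 0 a = 0 then U $$ (k,b) else 0) else 0))" .
    thus "?thesis a b" using ab by simp
  qed
  have PUr: "\<And>a b. a < d \<Longrightarrow> b < d \<Longrightarrow> (Pi_acc n * U * rho_init n 1) $$ (a,b) =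
      (if qbit n 0 a = 0 \<and> b div 2^(n-1) = 0 then U $$ (a,b) / 2^(n-1) else 0)"
  proof -
    fix a b assume ab: "a < d" "b < d"
    have c: "Pi_acc n * U \<in> carrier_mat d d" using Pi Ud by simp
    have "(Pi_acc n * U * rho_init n 1) $$ (a,b) = (\<Sum>k<d. (Pi_acc n * U) $$ (a,k) * rho_init n 1 $$ (k,b))"
      using ab c rho by (intro mult_entry) auto
    also have "\<dots> = (\<Sum>k<d. (if k = b then
       (Pi_acc n * U) $$ (a,k) * (if b div 2^(n-1) = 0 then 1 / 2^(n-1) else 0) else 0))"
      using ab by (intro sum.cong) (auto simp: rho_init_def d_def)
    finally have "(Pi_acc n * U * rho_init n 1) $$ (a,b) = (\<Sum>k<d. (if k = b then
       (Pi_acc n * U) $$ (a,k) * (if b div 2^(n-1) = 0 then 1 / 2^(n-1) else 0) else 0))" .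
    thus "?thesis a b" using ab PU by simp
  qed
  have tr: "mtrace (Pi_acc n * U * rho_init n 1 * adj U) =
      (\<Sum>a<d. \<Sum>b<d. (if qbit n 0 a = 0 \<and> b div 2^(n-1) = 0 then U $$ (a,b) / 2^(n-1) else 0) * cnj (U $$ (a,b)))"
  proof -
    have c: "Pi_acc n * U * rho_init n 1 \<in> carrier_mat d d" using Pi Ud rho by simp
    have "mtrace (Pi_acc n * U * rho_init n 1 * adj U) = (\<Sum>a<d. (Pi_acc n * U * rho_init n 1 * adj U) $$ (a,a))"
      using c adjU by (simp add: mtrace_def Pi_acc_def d_def)
    also have "\<dots> = (\<Sum>a<d. \<Sum>b<d. (Pi_acc n * U * rho_init n 1) $$ (a,b) * adj U $$ (b,a))"
      using c adjU by (intro sum.cong refl mult_entry) auto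
    also have "\<dots> = (\<Sum>a<d. \<Sum>b<d. (if qbit n 0 a = 0 \<and> b div 2^(n-1) = 0 then U $$ (a,b) / 2^(n-1) else 0) * cnj (U $$ (a,b)))"
      using PUr Ud by (intro sum.cong refl) (auto simp: adj_def)
    finally show ?thesis .
  qed
  have "p_acc n U 1 = (\<Sum>a<d. \<Sum>b<d. if qbit n 0 a = 0 \<and> b div 2^(n-1) = 0 then (cmod (U $$ (a,b)))^2 / 2^(n-1) else 0)"
    unfolding p_acc_def tr Re_sum
    by (intro sum.cong refl) (auto simp: power2_eq_square cmod_sq' add_divide_distrib)
  also have "\<dots> = (\<Sum>b<d. \<Sum>a<d. if qbit n 0 a = 0 \<and> b div 2^(n-1) = 0 then (cmod (U $$ (a,b)))^2 / 2^(n-1) else 0)"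
    by (rule sum.swap)
  also have "\<dots> = (\<Sum>b<d. if b < 2^(n-1) then (\<Sum>a<d. if qbit n 0 a = 0 then (cmod (U $$ (a,b)))^2 else 0) / 2^(n-1) else 0)"
    by (intro sum.cong refl) (auto simp: sum_divide_distrib div_eq_0_iff intro!: sum.cong)
  also have "\<dots> = (\<Sum>b\<in>{b\<in>{..<d}. b < 2^(n-1)}. (\<Sum>a<d. if qbit n 0 a = 0 then (cmod (U $$ (a,b)))^2 else 0) / 2^(n-1))"
    by (subst sum.inter_filter) auto
  also have "{b\<in>{..<d}. b < 2^(n-1)} = {..<2^(n-1)}" using dpos by auto
  finally show ?thesis by (simp add: d_def sum_divide_distrib)
qed



lemma mod_inv_iff:
  fixes c d q L :: nat
  assumes "c < L" "d < L" "q \<le> 1"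
  shows "(c = (d + q) mod L) \<longleftrightarrow> (d = (c + L - q) mod L)"
proof
  assume h: "c = (d + q) mod L"
  have "(c + L - q) mod L = ((d + q) mod L + (L - q)) mod L" using h assms by simp
  also have "\<dots> = (d + q + (L - q)) mod L" by (simp add: mod_add_left_eq)
  also have "d + q + (L - q) = d + L" using assms by simp
  finally show "d = (c + L - q) mod L" using assms by simp
next
  assume h: "d = (c + L - q) mod L"
  have "(d + q) mod L = ((c + L - q) mod L + q) mod L" using h by simp
  also have "\<dots> = (c + L - q + q) mod L" by (simp add: mod_add_left_eq)
  also have "c + L - q + q = c + L" using assms by simp
  finally show "c = (d + q) mod L" using assms by simp
qed

lemma mod_inv1: "(c::nat) < L \<Longrightarrow> q \<le> 1 \<Longrightarrow> ((c + L - q) mod L + q) mod L = c"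
  using mod_inv_iff[of c L "(c + L - q) mod L" q] by simp

lemma mod_inv2: "(d::nat) < L \<Longrightarrow> q \<le> 1 \<Longrightarrow> 1 \<le> L \<Longrightarrow> ((d + q) mod L + L - q) mod L = d"
  using mod_inv_iff[of "(d + q) mod L" L d q] by simp

lemma xor2: "a < 2 \<Longrightarrow> b < (2::nat) \<Longrightarrow> ((a + b) mod 2 + b) mod 2 = a"
  by (cases a; cases b) auto

lemma split_div: "a < 2 * D \<Longrightarrow> (a::nat) div D < 2"
  by (simp add: less_mult_imp_div_less mult.commute)

lemma perm_mat_entry: "a < d \<Longrightarrow> b < d \<Longrightarrow> perm_mat d f $$ (a,b) = (if a = f b then 1 else 0)"
  by (simp add: perm_mat_def)

lemma bit_cases: "(a::nat) < 2 \<Longrightarrow> a = 0 \<or> a = 1" by arith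

lemma cnot_f: assumes "(a::nat) = 0 \<or> a = 1" "(b::nat) = 0 \<or> b = 1"
  shows "(if (2 * a + b) div 2 = 1 then 2 + (1 - (2 * a + b) mod 2) else 2 * a + b)
      = 2 * a + (b + a) mod 2"
  using assms by (elim disjE; simp)

lemma cnot_eqv: assumes "(a::nat) = 0 \<or> a = 1" "(b::nat) = 0 \<or> b = 1" "(c::nat) = 0 \<or> c = 1" "(d::nat) = 0 \<or> d = 1"
  shows "(2 * c + d = 2 * a + (b + a) mod 2) \<longleftrightarrow> (a = c \<and> b = (d + c) mod 2)"
  using assms by (elim disjE; simp)

locale circ =
  fixes w N l :: nat and Q :: "complex mat"
  assumes w1: "w \<ge> 1" and Qc: "Q \<in> carrier_mat (2^w) (2^w)"
    and lN: "2^l = 2 * N" and l1: "l \<ge> 1"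
begin

definition "n = R1_qubits w N l"
definition "base j = l + 1 + (j - 1) * w"
definition "cval i = sub_index n [0..<l] i"
definition "qv i = qbit n l i"
definition "rv j i = sub_index n (R_reg w l j) i"
definition "xv j i = qbit n (X_pos w l j) i"

lemma n_def': "n = l + 1 + 2 * N * w" by (simp add: n_def R1_qubits_def)

lemma base_bounds: "1 \<le> j \<Longrightarrow> j \<le> 2 * N \<Longrightarrow> l < base j \<and> base j + w \<le> n"
proof -
  assume j: "1 \<le> j" "j \<le> 2 * N"
  have "(j - 1) * w + w = j * w" using j by (cases j) auto
  also have "\<dots> \<le> 2 * N * w" using j by (intro mult_le_mono1)
  finally have "(j - 1) * w + w \<le> 2 * N * w" .
  thus ?thesis using j by (simp add: base_def n_def')
qed

lemma base_Suc: "base (Suc j) = base j + (if j = 0 then 0 else w)"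
  by (cases j) (auto simp: base_def)

lemma X_pos_eq: "X_pos w l j = base j + (w - 1)"
  by (simp add: X_pos_def base_def)

lemma R_len[simp]: "length (R_reg w l j) = w - 1"
  unfolding R_reg_def length_upt by simp

lemma R_nth: "t < w - 1 \<Longrightarrow> R_reg w l j ! t = base j + t"
  unfolding R_reg_def base_def by (subst nth_upt) auto

lemma R_set: "set (R_reg w l j) = {base j ..< base j + (w - 1)}"
  unfolding R_reg_def base_def set_upt by simp

lemma cval_mk: "cval i = mk l (\<lambda>t. qbit n t i)"
  unfolding cval_def sub_index_mk length_upt diff_zero by (rule mk_cong) simp

lemma rv_mk: "rv j i = mk (w - 1) (\<lambda>t. qbit n (base j + t) i)"
  unfolding rv_def sub_index_mk R_len by (rule mk_cong) (simp add: R_nth)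

lemma cval_less: "cval i < 2^l"
  by (simp add: cval_mk mk_less)

lemma rv_less: "rv j i < 2^(w-1)"
  by (simp add: rv_mk mk_less)

lemma qv_less: "qv i < 2" by (simp add: qv_def)
lemma xv_less: "xv j i < 2" by (simp add: xv_def)

lemma qbit_cval: "t < l \<Longrightarrow> qbit l t (cval i) = qbit n t i"
  using qbit_sub[of t "[0..<l]" n i] by (simp add: cval_def)

lemma qbit_rv: "t < w - 1 \<Longrightarrow> qbit (w-1) t (rv j i) = qbit n (base j + t) i"
  using qbit_sub[of t "R_reg w l j" n i] by (simp add: rv_def R_nth)

lemma cval_eq_iff: "c < 2^l \<Longrightarrow> cval m = c \<longleftrightarrow> (\<forall>p<l. qbit n p m = qbit l p c)"
proof
  assume "c < 2^l" "cval m = c" thus "\<forall>p<l. qbit n p m = qbit l p c" using qbit_cval by metis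
next
  assume c: "c < 2^l" "\<forall>p<l. qbit n p m = qbit l p c"
  have "cval m = mk l (\<lambda>t. qbit l t c)" unfolding cval_mk by (rule mk_cong) (use c in auto)
  thus "cval m = c" using mk_qbit c by simp
qed

lemma rv_eq_iff: "r < 2^(w-1) \<Longrightarrow> rv j m = r \<longleftrightarrow> (\<forall>t<w-1. qbit n (base j + t) m = qbit (w-1) t r)"
proof
  assume "r < 2^(w-1)" "rv j m = r" thus "\<forall>t<w-1. qbit n (base j + t) m = qbit (w-1) t r" using qbit_rv by metis
next
  assume c: "r < 2^(w-1)" "\<forall>t<w-1. qbit n (base j + t) m = qbit (w-1) t r"
  have "rv j m = mk (w-1) (\<lambda>t. qbit (w-1) t r)" unfolding rv_mk by (rule mk_cong) (use c in auto)
  thus "rv j m = r" using mk_qbit c by simp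
qed

lemma sub_inc: "sub_index n (l # [0..<l]) i = qv i * 2^l + cval i"
  by (simp add: sub_index_Cons qv_def cval_def)

lemma sub_cnot: "sub_index n [l, X_pos w l j] i = 2 * qv i + xv j i"
  by (simp add: sub_index_Cons qv_def xv_def sub_index_def)

lemma sub_Q: "sub_index n (l # R_reg w l j) i = qv i * 2^(w-1) + rv j i"
  by (simp add: sub_index_Cons qv_def rv_def)

lemma l_less_n: "l < n" by (simp add: n_def')

definition "sinc x = mk n (\<lambda>p. if p < l then qbit l p ((cval x + 2^l - qv x) mod 2^l) else qbit n p x)"

lemma sinc_less: "sinc x < 2^n" by (simp add: sinc_def mk_less)

lemma qbit_sinc: "p < n \<Longrightarrow> qbit n p (sinc x) = (if p < l then qbit l p ((cval x + 2^l - qv x) mod 2^l) else qbit n p x)"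
  unfolding sinc_def by (rule qbit_mk) auto

lemma cval_sinc: "cval (sinc x) = (cval x + 2^l - qv x) mod 2^l"
  using l_less_n by (subst cval_eq_iff) (auto simp: qbit_sinc)

lemma qv_sinc: "qv (sinc x) = qv x"
  using l_less_n by (simp add: qv_def qbit_sinc)

lemma decomp_eq: "(a::nat) * L + b = a' * L + b' \<Longrightarrow> b < L \<Longrightarrow> b' < L \<Longrightarrow> a = a' \<and> b = b'"
proof -
  assume h: "a * L + b = a' * L + b'" "b < L" "b' < L"
  have d: "\<And>x y. y < L \<Longrightarrow> (x * L + y) div L = x \<and> (x * L + y) mod L = y"
    by simp
  show ?thesis using d[of b a] d[of b' a'] h by metis
qed

lemma inc_entry:
  assumes "x < 2^n" "m < 2^n"
  shows "embed n (l # [0..<l]) (C_inc l) $$ (x, m) = (if m = sinc x then 1 else 0)"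
proof -
  have sx: "sub_index n (l # [0..<l]) x < 2^(l+1)" "sub_index n (l # [0..<l]) m < 2^(l+1)"
    using sub_index_less[of n "l # [0..<l]"] by auto
  have f: "(qv m * 2^l + cval m) div 2^l = qv m" "(qv m * 2^l + cval m) mod 2^l = cval m"
    using cval_less by auto
  have qm: "qv m = 0 \<or> qv m = 1" using qv_less[of m] by auto
  have ff: "(if (qv m * 2^l + cval m) div 2^l = 1 then 2^l + ((qv m * 2^l + cval m) mod 2^l + 1) mod 2^l
            else qv m * 2^l + cval m) = qv m * 2^l + (cval m + qv m) mod 2^l"
    unfolding f using qm cval_less[of m] by auto
  have eqv: "(qv x * 2^l + cval x = qv m * 2^l + (cval m + qv m) mod 2^l) \<longleftrightarrow>
             (qv m = qv x \<and> cval m = (cval x + 2^l - qv x) mod 2^l)"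
  proof
    assume h: "qv x * 2^l + cval x = qv m * 2^l + (cval m + qv m) mod 2^l"
    hence "qv x = qv m \<and> cval x = (cval m + qv m) mod 2^l"
      using decomp_eq[OF h] cval_less by simp
    thus "qv m = qv x \<and> cval m = (cval x + 2^l - qv x) mod 2^l"
      using mod_inv_iff[of "cval x" "2^l" "cval m" "qv m"] cval_less qv_less[of m] by auto
  next
    assume h: "qv m = qv x \<and> cval m = (cval x + 2^l - qv x) mod 2^l"
    thus "qv x * 2^l + cval x = qv m * 2^l + (cval m + qv m) mod 2^l"
      using mod_inv_iff[of "cval x" "2^l" "cval m" "qv m"] cval_less qv_less[of m] by auto
  qed
  have iff: "((\<forall>p<n. p \<notin> set (l # [0..<l]) \<longrightarrow> qbit n p x = qbit n p m) \<and>
       qv x * 2^l + cval x = qv m * 2^l + (cval m + qv m) mod 2^l) \<longleftrightarrow> m = sinc x"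
  proof
    assume h: "(\<forall>p<n. p \<notin> set (l # [0..<l]) \<longrightarrow> qbit n p x = qbit n p m) \<and>
       qv x * 2^l + cval x = qv m * 2^l + (cval m + qv m) mod 2^l"
    hence h2: "qv m = qv x" "cval m = (cval x + 2^l - qv x) mod 2^l" using eqv by auto
    have "\<forall>p<n. qbit n p m = qbit n p (sinc x)"
    proof (intro allI impI)
      fix p assume p: "p < n"
      show "qbit n p m = qbit n p (sinc x)"
      proof (cases "p < l")
        case True thus ?thesis using h2 p cval_eq_iff[of "(cval x + 2^l - qv x) mod 2^l" m]
          by (auto simp: qbit_sinc)
      next
        case False
        show ?thesis
        proof (cases "p = l")
          case True thus ?thesis using h2 p by (auto simp: qbit_sinc qv_def)
        next
          case False
          thus ?thesis using h p \<open>\<not> p < l\<close> by (auto simp: qbit_sinc)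
        qed
      qed
    qed
    thus "m = sinc x" using qbit_eq[OF assms(2) sinc_less] by blast
  next
    assume h: "m = sinc x"
    show "(\<forall>p<n. p \<notin> set (l # [0..<l]) \<longrightarrow> qbit n p x = qbit n p m) \<and>
       qv x * 2^l + cval x = qv m * 2^l + (cval m + qv m) mod 2^l"
      using h eqv by (auto simp: qbit_sinc cval_sinc qv_sinc)
  qed
  have e1: "embed n (l # [0..<l]) (C_inc l) $$ (x, m) = (if (\<forall>p<n. p \<notin> set (l # [0..<l]) \<longrightarrow> qbit n p x = qbit n p m)
    then C_inc l $$ (sub_index n (l # [0..<l]) x, sub_index n (l # [0..<l]) m) else 0)"
    by (rule embed_entry[OF assms])
  have e2: "C_inc l $$ (sub_index n (l # [0..<l]) x, sub_index n (l # [0..<l]) m) =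
     (if qv x * 2^l + cval x = qv m * 2^l + (cval m + qv m) mod 2^l then 1 else 0)"
    unfolding C_inc_def using sx by (simp only: perm_mat_entry sub_inc ff)
  show ?thesis unfolding e1 e2 using iff by (auto simp del: One_nat_def)
qed


lemma Xj_bounds: "1 \<le> j \<Longrightarrow> j \<le> 2 * N \<Longrightarrow> l < X_pos w l j \<and> X_pos w l j < n"
  using base_bounds[of j] w1 unfolding X_pos_eq by arith

definition "scn j x = mk n (\<lambda>p. if p = X_pos w l j then (xv j x + qv x) mod 2 else qbit n p x)"

lemma scn_less: "scn j x < 2^n" by (simp add: scn_def mk_less)

lemma qbit_scn: "p < n \<Longrightarrow> qbit n p (scn j x) = (if p = X_pos w l j then (xv j x + qv x) mod 2 else qbit n p x)"
  unfolding scn_def by (rule qbit_mk) auto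

lemma cnot_entry:
  assumes j: "1 \<le> j" "j \<le> 2 * N" and "x < 2^n" "m < 2^n"
  shows "embed n [l, X_pos w l j] CNOT $$ (x, m) = (if m = scn j x then 1 else 0)"
proof -
  have X: "l < X_pos w l j" "X_pos w l j < n" using Xj_bounds[OF j] by auto
  have sx: "sub_index n [l, X_pos w l j] x < 4" "sub_index n [l, X_pos w l j] m < 4"
    using sub_index_less[of n "[l, X_pos w l j]"] by auto
  have b01: "\<And>y. qv y = 0 \<or> qv y = 1" "\<And>y. xv j y = 0 \<or> xv j y = 1"
    using qv_less xv_less bit_cases by blast+
  have ff: "(if (2 * qv m + xv j m) div 2 = 1 then 2 + (1 - (2 * qv m + xv j m) mod 2) else 2 * qv m + xv j m)
      = 2 * qv m + (xv j m + qv m) mod 2"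
    by (rule cnot_f[OF b01(1) b01(2)])
  have eqv: "(2 * qv x + xv j x = 2 * qv m + (xv j m + qv m) mod 2) \<longleftrightarrow>
             (qv m = qv x \<and> xv j m = (xv j x + qv x) mod 2)"
    by (rule cnot_eqv[OF b01(1) b01(2) b01(1) b01(2)])
  have iff: "((\<forall>p<n. p \<notin> set [l, X_pos w l j] \<longrightarrow> qbit n p x = qbit n p m) \<and>
       2 * qv x + xv j x = 2 * qv m + (xv j m + qv m) mod 2) \<longleftrightarrow> m = scn j x"
  proof
    assume h: "(\<forall>p<n. p \<notin> set [l, X_pos w l j] \<longrightarrow> qbit n p x = qbit n p m) \<and>
       2 * qv x + xv j x = 2 * qv m + (xv j m + qv m) mod 2"
    hence h2: "qv m = qv x" "xv j m = (xv j x + qv x) mod 2" using eqv by auto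
    have "\<forall>p<n. qbit n p m = qbit n p (scn j x)"
    proof (intro allI impI)
      fix p assume p: "p < n"
      show "qbit n p m = qbit n p (scn j x)"
        using h h2 p X by (cases "p = l"; cases "p = X_pos w l j") (auto simp: qbit_scn qv_def xv_def)
    qed
    thus "m = scn j x" using qbit_eq[OF assms(4) scn_less] by blast
  next
    assume h: "m = scn j x"
    have "qv m = qv x" "xv j m = (xv j x + qv x) mod 2"
      using h X l_less_n by (auto simp: qv_def xv_def qbit_scn)
    thus "(\<forall>p<n. p \<notin> set [l, X_pos w l j] \<longrightarrow> qbit n p x = qbit n p m) \<and>
       2 * qv x + xv j x = 2 * qv m + (xv j m + qv m) mod 2"
      using h eqv by (auto simp: qbit_scn)
  qed
  have e1: "embed n [l, X_pos w l j] CNOT $$ (x, m) = (if (\<forall>p<n. p \<notin> set [l, X_pos w l j] \<longrightarrow> qbit n p x = qbit n p m)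
    then CNOT $$ (sub_index n [l, X_pos w l j] x, sub_index n [l, X_pos w l j] m) else 0)"
    by (rule embed_entry[OF assms(3,4)])
  have e2: "CNOT $$ (sub_index n [l, X_pos w l j] x, sub_index n [l, X_pos w l j] m) =
     (if 2 * qv x + xv j x = 2 * qv m + (xv j m + qv m) mod 2 then 1 else 0)"
    unfolding CNOT_def using sx by (simp only: perm_mat_entry sub_cnot ff)
  show ?thesis unfolding e1 e2 using iff by (auto simp del: One_nat_def)
qed

lemma Q_entry:
  assumes "y < 2^n" "k < 2^n"
  shows "embed n (l # R_reg w l j) Q $$ (y, k) =
    (if (\<forall>p<n. p \<noteq> l \<and> \<not> (base j \<le> p \<and> p < base j + (w - 1)) \<longrightarrow> qbit n p y = qbit n p k)
     then Q $$ (qv y * 2^(w-1) + rv j y, qv k * 2^(w-1) + rv j k) else 0)"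
proof -
  have c: "(\<forall>p<n. p \<notin> set (l # R_reg w l j) \<longrightarrow> qbit n p y = qbit n p k) =
     (\<forall>p<n. p \<noteq> l \<and> \<not> (base j \<le> p \<and> p < base j + (w - 1)) \<longrightarrow> qbit n p y = qbit n p k)"
    by (auto simp: R_set)
  show ?thesis unfolding embed_entry[OF assms] sub_Q c ..
qed

definition "invar U t i \<longleftrightarrow> (\<forall>k<2^n. U $$ (k,i) \<noteq> 0 \<longrightarrow>
   (\<forall>p. base (t+1) \<le> p \<and> p < n \<longrightarrow> qbit n p k = qbit n p i) \<and>
   qv k = (if t = 0 then qv i else (xv t k + xv t i) mod 2))"

end


locale stp = circ +
  fixes j i :: nat
  assumes j1: "1 \<le> j" and jN: "j \<le> 2 * N" and ilt: "i < 2^n"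
begin

definition "qk x = (if j = 1 then qv i else (xv (j-1) x + xv (j-1) i) mod 2)"
definition "inR p \<longleftrightarrow> base j \<le> p \<and> p < base j + (w - 1)"
abbreviation "Xj \<equiv> X_pos w l j"
abbreviation "Xp \<equiv> X_pos w l (j - 1)"
definition "ad s = (s::nat) div 2^(w-1) mod 2"

definition "K x = mk n (\<lambda>p. if p < l then qbit l p ((cval x + 2^l - qv x) mod 2^l)
   else if p = l then qk x else if inR p then qbit n p i
   else if p = Xj then (xv j x + qv x) mod 2 else qbit n p x)"

definition "Phi k s = mk n (\<lambda>p. if p < l then qbit l p ((cval k + ad s) mod 2^l)
   else if p = l then ad s else if inR p then qbit (w-1) (p - base j) (s mod 2^(w-1))
   else if p = Xj then (xv j k + ad s) mod 2 else qbit n p k)"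

lemma pos: "l < base j" "Xj = base j + (w - 1)" "Xj < n" "\<not> inR Xj" "Xj \<noteq> l" "base j + w \<le> n"
  "inR p \<Longrightarrow> l < p \<and> p < n"
  using base_bounds[OF j1 jN] w1 by (auto simp: X_pos_eq inR_def)

lemma posp: "j \<noteq> 1 \<Longrightarrow> l < Xp \<and> Xp < base j \<and> Xp \<noteq> l \<and> \<not> inR Xp \<and> Xp \<noteq> Xj"
proof -
  assume "j \<noteq> 1"
  hence j2: "j \<ge> 2" using j1 by simp
  have "base j = base (j - 1) + w" using j2 base_Suc[of "j - 1"] by simp
  moreover have "l < base (j - 1)" using base_bounds[of "j - 1"] j2 jN by simp
  ultimately show ?thesis using w1 by (auto simp: X_pos_eq inR_def)
qed

lemma qk_less: "qk x < 2" by (simp add: qk_def qv_less)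
lemma ad_less: "ad s < 2" by (simp add: ad_def)

lemma K_less: "K x < 2^n" unfolding K_def by (rule mk_less) (auto simp: qk_less)
lemma Phi_less: "Phi k s < 2^n" unfolding Phi_def by (rule mk_less) (auto simp: ad_less)

lemma qbit_K: "p < n \<Longrightarrow> qbit n p (K x) = (if p < l then qbit l p ((cval x + 2^l - qv x) mod 2^l)
   else if p = l then qk x else if inR p then qbit n p i
   else if p = Xj then (xv j x + qv x) mod 2 else qbit n p x)"
  unfolding K_def by (rule qbit_mk) (auto simp: qk_less)

lemma qbit_Phi: "p < n \<Longrightarrow> qbit n p (Phi k s) = (if p < l then qbit l p ((cval k + ad s) mod 2^l)
   else if p = l then ad s else if inR p then qbit (w-1) (p - base j) (s mod 2^(w-1))
   else if p = Xj then (xv j k + ad s) mod 2 else qbit n p k)"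
  unfolding Phi_def by (rule qbit_mk) (auto simp: ad_less)

lemma qbit_y: "p < n \<Longrightarrow> qbit n p (scn j (sinc x)) = (if p = Xj then (xv j x + qv x) mod 2
   else if p < l then qbit l p ((cval x + 2^l - qv x) mod 2^l) else qbit n p x)"
  using pos l_less_n by (auto simp: qbit_scn qbit_sinc xv_def qv_def)

lemma cval_K: "cval (K x) = (cval x + 2^l - qv x) mod 2^l"
  using l_less_n by (subst cval_eq_iff) (auto simp: qbit_K)
lemma qv_K: "qv (K x) = qk x"
  using l_less_n by (simp add: qv_def qbit_K)
lemma rv_K: "rv j (K x) = rv j i"
proof (subst rv_eq_iff)
  show "rv j i < 2^(w-1)" by (rule rv_less)
  show "\<forall>t<w - 1. qbit n (base j + t) (K x) = qbit (w - 1) t (rv j i)"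
    using pos w1 qbit_rv[of _ j i] by (auto simp: qbit_K inR_def)
qed
lemma xv_K: "xv j (K x) = (xv j x + qv x) mod 2"
  using pos by (simp add: xv_def qbit_K)
lemma xvp_K: "j \<noteq> 1 \<Longrightarrow> xv (j-1) (K x) = xv (j-1) x"
  using posp pos by (simp add: xv_def qbit_K)


lemma y_less: "scn j (sinc x) < 2^n" by (rule scn_less)

lemma qv_y: "qv (scn j (sinc x)) = qv x"
  using pos l_less_n by (simp add: qv_def qbit_y)

lemma rv_y: "rv j (scn j (sinc x)) = rv j x"
proof (subst rv_eq_iff)
  show "rv j x < 2^(w-1)" by (rule rv_less)
  show "\<forall>t<w - 1. qbit n (base j + t) (scn j (sinc x)) = qbit (w - 1) t (rv j x)"
    using pos w1 qbit_rv[of _ j x] by (auto simp: qbit_y)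
qed

lemma agreeK: "\<forall>p<n. p \<noteq> l \<and> \<not> inR p \<longrightarrow> qbit n p (scn j (sinc x)) = qbit n p (K x)"
  using pos by (auto simp: qbit_y qbit_K)

lemma step_entry:
  assumes U: "U \<in> carrier_mat (2^n) (2^n)" and inv: "invar U (j-1) i" and x: "x < 2^n"
  shows "(R1_step w N l Q j * U) $$ (x,i) =
     Q $$ (qv x * 2^(w-1) + rv j x, qk x * 2^(w-1) + rv j i) * U $$ (K x, i)"
proof -
  define Ei where "Ei = embed n (l # [0..<l]) (C_inc l)"
  define Ec where "Ec = embed n [l, Xj] CNOT"
  define Eq where "Eq = embed n (l # R_reg w l j) Q"
  have c: "Ei \<in> carrier_mat (2^n) (2^n)" "Ec \<in> carrier_mat (2^n) (2^n)" "Eq \<in> carrier_mat (2^n) (2^n)"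
    by (simp_all add: Ei_def Ec_def Eq_def)
  have st: "R1_step w N l Q j = Ei * Ec * Eq" by (simp add: R1_step_def Ei_def Ec_def Eq_def n_def)
  have "R1_step w N l Q j * U = Ei * Ec * (Eq * U)" unfolding st
    by (rule assoc_mult_mat[of _ "2^n" "2^n" _ "2^n" _ "2^n"]) (use c U in auto)
  also have "\<dots> = Ei * (Ec * (Eq * U))"
    by (rule assoc_mult_mat[of _ "2^n" "2^n" _ "2^n" _ "2^n"]) (use c U in auto)
  finally have st2: "R1_step w N l Q j * U = Ei * (Ec * (Eq * U))" .
  define y where "y = scn j (sinc x)"
  have y: "y < 2^n" by (simp add: y_def scn_less)
  have 1: "(Ei * (Ec * (Eq * U))) $$ (x,i) = (Ec * (Eq * U)) $$ (sinc x, i)"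
    by (rule perm_collapse[where d="2^n"]) (use c U x ilt sinc_less inc_entry in \<open>auto simp: Ei_def\<close>)
  have 2: "(Ec * (Eq * U)) $$ (sinc x, i) = (Eq * U) $$ (y, i)"
    by (rule perm_collapse[where d="2^n"]) (use c U x ilt sinc_less scn_less cnot_entry[OF j1 jN] in \<open>auto simp: Ec_def y_def\<close>)
  have 3: "(Eq * U) $$ (y, i) = (\<Sum>k<2^n. Eq $$ (y,k) * U $$ (k,i))"
    using c U y ilt by (intro mult_entry) auto
  have vanish: "\<And>k. k < 2^n \<Longrightarrow> k \<noteq> K x \<Longrightarrow> Eq $$ (y,k) * U $$ (k,i) = 0"
  proof (rule ccontr)
    fix k assume k: "k < 2^n" "k \<noteq> K x" and nz: "Eq $$ (y,k) * U $$ (k,i) \<noteq> 0"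
    hence e: "Eq $$ (y,k) \<noteq> 0" and u: "U $$ (k,i) \<noteq> 0" by auto
    from e have ag: "\<forall>p<n. p \<noteq> l \<and> \<not> inR p \<longrightarrow> qbit n p y = qbit n p k"
      using Q_entry[OF y k(1), of j] by (auto simp: Eq_def inR_def split: if_splits)
    have bj: "base (j - 1 + 1) = base j" using j1 by simp
    from u inv k have iv: "\<forall>p. base j \<le> p \<and> p < n \<longrightarrow> qbit n p k = qbit n p i"
       "qv k = (if j - 1 = 0 then qv i else (xv (j-1) k + xv (j-1) i) mod 2)"
      unfolding invar_def bj by auto
    have "\<forall>p<n. qbit n p k = qbit n p (K x)"
    proof (intro allI impI)
      fix p assume p: "p < n"
      show "qbit n p k = qbit n p (K x)"
      proof (cases "p = l")
        case True
        show ?thesis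
        proof (cases "j = 1")
          case True
          have h1: "qbit n l (K x) = qk x" using qv_K by (simp add: qv_def)
          have h2: "qk x = qv i" unfolding qk_def using True by simp
          have h3: "qv k = qv i" using iv(2) True by simp
          show ?thesis using h1 h2 h3 \<open>p = l\<close> by (simp add: qv_def)
        next
          case False
          have "xv (j-1) k = xv (j-1) x"
            using ag[rule_format, of Xp] posp[OF False] qbit_y[of Xp x] pos
            by (simp add: xv_def y_def)
          thus ?thesis using iv \<open>p = l\<close> l_less_n False j1 by (simp add: qbit_K qk_def qv_def)
        qed
      next
        case False
        show ?thesis
        proof (cases "inR p")
          case True thus ?thesis using iv p pos by (auto simp: qbit_K inR_def)
        next
          case False
          thus ?thesis using ag agreeK[of x] p \<open>p \<noteq> l\<close> by (simp add: y_def)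
        qed
      qed
    qed
    hence "k = K x" using qbit_eq[OF k(1) K_less] by blast
    thus False using k by simp
  qed
  have 4: "(\<Sum>k<2^n. Eq $$ (y,k) * U $$ (k,i)) = Eq $$ (y, K x) * U $$ (K x, i)"
    by (rule sum_collapse1[OF K_less vanish])
  have 5: "Eq $$ (y, K x) = Q $$ (qv x * 2^(w-1) + rv j x, qk x * 2^(w-1) + rv j i)"
    using Q_entry[OF y K_less, of j] agreeK[of x]
    by (simp add: Eq_def y_def inR_def qv_y rv_y qv_K rv_K)
  show ?thesis unfolding st2 1 2 3 4 5 ..
qed

end


lemma xor_solve: "(a::nat) < 2 \<Longrightarrow> b < 2 \<Longrightarrow> (b + a) mod 2 = c \<Longrightarrow> a = (b + c) mod 2"
  by (cases a; cases b) auto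

lemma sum_split2: "(\<Sum>s<2 * D. h s) = (\<Sum>a<(2::nat). \<Sum>r<D. h (a * D + r))"
proof -
  have "(\<Sum>s<2 * D. h s) = (\<Sum>s<D. h s) + (\<Sum>s\<in>{D..<2*D}. h s)"
    unfolding lessThan_atLeast0 by (rule sum.atLeastLessThan_concat[symmetric]) auto
  also have "(\<Sum>s\<in>{D..<2*D}. h s) = (\<Sum>r<D. h (D + r))"
    by (rule sum.reindex_bij_witness[of _ "\<lambda>r. D + r" "\<lambda>s. s - D"]) auto
  finally show ?thesis by (simp add: numeral_2_eq_2)
qed

context circ begin
definition "M r a b = (\<Sum>r'<2^(w-1). (cmod (Q $$ (a * 2^(w-1) + r', b * 2^(w-1) + r)))^2)"
end

context stp begin

definition "sQ x = qv x * 2^(w-1) + rv j x"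
definition "V = {k. k < 2^n \<and> rv j k = rv j i \<and> qv k = qk k}"

lemma sQ_less: "sQ x < 2^w"
proof -
  have "qv x * 2^(w-1) + rv j x < 2 * 2^(w-1)"
    using qv_less[of x] rv_less[of j x] by (cases "qv x = 0") (auto dest: bit_cases)
  also have "2 * 2^(w-1) = (2::nat)^w" using w1 by (cases w) auto
  finally show ?thesis by (simp add: sQ_def)
qed

lemma ad_sQ: "ad (sQ x) = qv x" and mod_sQ: "sQ x mod 2^(w-1) = rv j x"
  using rv_less[of j x] qv_less[of x] by (auto simp: ad_def sQ_def)

lemma ad_div: "s < 2^w \<Longrightarrow> ad s = s div 2^(w-1)"
proof -
  assume s: "s < 2^w"
  have "(2::nat)^w = 2 * 2^(w-1)" using w1 by (cases w) auto
  hence "s div 2^(w-1) < 2" using s by (simp add: split_div)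
  thus ?thesis by (simp add: ad_def)
qed

lemma cval_Phi: "cval (Phi k s) = (cval k + ad s) mod 2^l"
  using l_less_n by (subst cval_eq_iff) (auto simp: qbit_Phi)
lemma qv_Phi: "qv (Phi k s) = ad s"
  using l_less_n by (simp add: qv_def qbit_Phi)
lemma rv_Phi: "rv j (Phi k s) = s mod 2^(w-1)"
proof (subst rv_eq_iff)
  show "s mod 2^(w-1) < 2^(w-1)" by simp
  show "\<forall>t<w - 1. qbit n (base j + t) (Phi k s) = qbit (w - 1) t (s mod 2^(w-1))"
    using pos w1 by (auto simp: qbit_Phi inR_def)
qed
lemma xv_Phi: "xv j (Phi k s) = (xv j k + ad s) mod 2"
  using pos by (simp add: xv_def qbit_Phi)
lemma xvp_Phi: "j \<noteq> 1 \<Longrightarrow> xv (j-1) (Phi k s) = xv (j-1) k"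
  using posp pos by (simp add: xv_def qbit_Phi)
lemma qk_Phi: "qk (Phi k s) = qk k"
  unfolding qk_def using xvp_Phi by auto
lemma qk_K: "qk (K x) = qk x"
  unfolding qk_def using xvp_K by auto

lemma B1: "x < 2^n \<Longrightarrow> Phi (K x) (sQ x) = x"
proof -
  assume x: "x < 2^n"
  have "\<forall>p<n. qbit n p (Phi (K x) (sQ x)) = qbit n p x"
  proof (intro allI impI)
    fix p assume p: "p < n"
    consider "p < l" | "p = l" | "inR p" | "p = Xj" | "\<not> p < l \<and> p \<noteq> l \<and> \<not> inR p \<and> p \<noteq> Xj" by blast
    thus "qbit n p (Phi (K x) (sQ x)) = qbit n p x"
    proof cases
      case 1
      have "(cval (K x) + qv x) mod 2^l = cval x"
        unfolding cval_K using mod_inv1[OF cval_less[of x], of "qv x"] qv_less[of x] by simp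
      thus ?thesis using 1 p by (simp add: qbit_Phi ad_sQ qbit_cval)
    next
      case 2 thus ?thesis using p by (simp add: qbit_Phi ad_sQ qv_def)
    next
      case 3
      hence "p = base j + (p - base j)" "p - base j < w - 1" by (auto simp: inR_def)
      thus ?thesis using 3 p pos qbit_rv[of "p - base j" j x] mod_sQ[of x] by (auto simp: qbit_Phi)
    next
      case 4
      have "qbit n Xj (Phi (K x) (sQ x)) = (xv j (K x) + ad (sQ x)) mod 2"
        using pos(3,4,5) Xj_bounds[OF j1 jN] by (simp add: qbit_Phi)
      also have "\<dots> = xv j x" unfolding xv_K ad_sQ by (rule xor2[OF xv_less qv_less])
      finally show ?thesis using 4 by (simp add: xv_def)
    next
      case 5 thus ?thesis using p by (simp add: qbit_Phi qbit_K)
    qed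
  qed
  thus ?thesis using qbit_eq[OF Phi_less x] by blast
qed

lemma B2: "K x \<in> V" by (simp add: V_def K_less rv_K qv_K qk_K)

lemma B3: assumes k: "k \<in> V" and s: "s < 2^w"
  shows "K (Phi k s) = k" "sQ (Phi k s) = s"
proof -
  have kn: "k < 2^n" and rk: "rv j k = rv j i" and qkk: "qv k = qk k" using k by (auto simp: V_def)
  have "\<forall>p<n. qbit n p (K (Phi k s)) = qbit n p k"
  proof (intro allI impI)
    fix p assume p: "p < n"
    consider "p < l" | "p = l" | "inR p" | "p = Xj" | "\<not> p < l \<and> p \<noteq> l \<and> \<not> inR p \<and> p \<noteq> Xj" by blast
    thus "qbit n p (K (Phi k s)) = qbit n p k"
    proof cases
      case 1
      have "(cval (Phi k s) + 2^l - qv (Phi k s)) mod 2^l = cval k"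
        unfolding cval_Phi qv_Phi using mod_inv2[OF cval_less[of k], of "ad s"] ad_less[of s] by simp
      thus ?thesis using 1 p by (simp add: qbit_K qbit_cval)
    next
      case 2 thus ?thesis using p qkk by (simp add: qbit_K qk_Phi qv_def)
    next
      case 3
      hence pp: "p = base j + (p - base j)" "p - base j < w - 1" by (auto simp: inR_def)
      have "qbit n (base j + (p - base j)) i = qbit n (base j + (p - base j)) k"
        using qbit_rv[of "p - base j" j i] qbit_rv[of "p - base j" j k] rk pp by simp
      thus ?thesis using 3 p pp pos(7)[OF 3] by (simp add: qbit_K)
    next
      case 4
      have "qbit n Xj (K (Phi k s)) = (xv j (Phi k s) + qv (Phi k s)) mod 2"
        using pos(3,4,5) Xj_bounds[OF j1 jN] by (simp add: qbit_K)
      also have "\<dots> = xv j k" unfolding xv_Phi qv_Phi by (rule xor2[OF xv_less ad_less])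
      finally show ?thesis using 4 by (simp add: xv_def)
    next
      case 5 thus ?thesis using p by (simp add: qbit_K qbit_Phi)
    qed
  qed
  thus "K (Phi k s) = k" using qbit_eq[OF K_less kn] by blast
  show "sQ (Phi k s) = s" unfolding sQ_def qv_Phi rv_Phi ad_div[OF s] by (rule div_mult_mod_eq)
qed


lemma inv_conseq:
  assumes inv: "invar U (j-1) i" and k: "k < 2^n" and nz: "U $$ (k,i) \<noteq> 0"
  shows "k \<in> V" "\<forall>p. base j \<le> p \<and> p < n \<longrightarrow> qbit n p k = qbit n p i"
proof -
  have bj: "base (j - 1 + 1) = base j" using j1 by simp
  from nz inv k have iv: "\<forall>p. base j \<le> p \<and> p < n \<longrightarrow> qbit n p k = qbit n p i"
       "qv k = (if j - 1 = 0 then qv i else (xv (j-1) k + xv (j-1) i) mod 2)"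
    unfolding invar_def bj by auto
  thus "\<forall>p. base j \<le> p \<and> p < n \<longrightarrow> qbit n p k = qbit n p i" by simp
  have "qv k = qk k" using iv(2) j1 unfolding qk_def by (cases "j = 1") auto
  moreover have "rv j k = rv j i"
  proof (subst rv_eq_iff)
    show "rv j i < 2^(w-1)" by (rule rv_less)
    show "\<forall>t<w - 1. qbit n (base j + t) k = qbit (w - 1) t (rv j i)"
      using iv(1) pos(6) qbit_rv[of _ j i] by auto
  qed
  ultimately show "k \<in> V" using k by (simp add: V_def)
qed

lemma inv_step:
  assumes U: "U \<in> carrier_mat (2^n) (2^n)" and inv: "invar U (j-1) i"
  shows "invar (R1_step w N l Q j * U) j i"
  unfolding invar_def
proof (intro allI impI)
  fix x assume x: "x < 2^n" and nz: "(R1_step w N l Q j * U) $$ (x,i) \<noteq> 0"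
  hence u: "U $$ (K x, i) \<noteq> 0" using step_entry[OF U inv x] by auto
  have ip: "\<forall>p. base j \<le> p \<and> p < n \<longrightarrow> qbit n p (K x) = qbit n p i"
    using inv_conseq(2)[OF inv K_less u] .
  have bs: "base (j + 1) = base j + w" using j1 base_Suc[of j] by simp
  have a: "\<forall>p. base (j+1) \<le> p \<and> p < n \<longrightarrow> qbit n p x = qbit n p i"
  proof (intro allI impI)
    fix p assume p: "base (j+1) \<le> p \<and> p < n"
    hence "\<not> p < l" "p \<noteq> l" "\<not> inR p" "p \<noteq> Xj" using pos w1 bs by (auto simp: inR_def)
    hence "qbit n p (K x) = qbit n p x" using p by (simp add: qbit_K)
    thus "qbit n p x = qbit n p i" using ip p bs by auto
  qed
  have "xv j (K x) = xv j i" using ip pos(2,3) by (simp add: xv_def)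
  hence "(xv j x + qv x) mod 2 = xv j i" by (simp add: xv_K)
  hence "qv x = (xv j x + xv j i) mod 2" by (rule xor_solve[OF qv_less xv_less])
  thus "(\<forall>p. base (j + 1) \<le> p \<and> p < n \<longrightarrow> qbit n p x = qbit n p i) \<and>
       qv x = (if j = 0 then qv i else (xv j x + xv j i) mod 2)" using a j1 by simp
qed

lemma sum_step:
  fixes g :: "nat \<Rightarrow> nat \<Rightarrow> real"
  assumes U: "U \<in> carrier_mat (2^n) (2^n)" and inv: "invar U (j-1) i"
  shows "(\<Sum>x<2^n. (cmod ((R1_step w N l Q j * U) $$ (x,i)))^2 * g (cval x) (qv x)) =
    (\<Sum>k<2^n. (cmod (U $$ (k,i)))^2 * (\<Sum>a<2. M (rv j i) a (qv k) * g ((cval k + a) mod 2^l) a))"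
proof -
  define D where "D = (2::nat)^(w-1)"
  have wD: "(2::nat)^w = 2 * D" using w1 unfolding D_def by (cases w) auto
  define F where "F k s = (cmod (Q $$ (s, qk k * D + rv j i)))^2 * (cmod (U $$ (k,i)))^2 *
      g (cval (Phi k s)) (qv (Phi k s))" for k s
  have "(\<Sum>x<2^n. (cmod ((R1_step w N l Q j * U) $$ (x,i)))^2 * g (cval x) (qv x)) =
        (\<Sum>x<2^n. F (K x) (sQ x))"
  proof (rule sum.cong[OF refl])
    fix x assume "x \<in> {..<(2::nat)^n}"
    hence x: "x < 2^n" by simp
    show "(cmod ((R1_step w N l Q j * U) $$ (x,i)))^2 * g (cval x) (qv x) = F (K x) (sQ x)"
      unfolding step_entry[OF U inv x] F_def B1[OF x] qk_K
      by (simp add: norm_mult power_mult_distrib sQ_def D_def)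
  qed
  also have "\<dots> = (\<Sum>(k,s)\<in>V \<times> {..<2^w}. F k s)"
    by (rule sum.reindex_bij_witness[of _ "\<lambda>(k,s). Phi k s" "\<lambda>x. (K x, sQ x)"])
       (auto simp: B1 B2 B3 sQ_less Phi_less)
  also have "\<dots> = (\<Sum>k\<in>V. \<Sum>s<2^w. F k s)"
    by (rule sum.cartesian_product[symmetric])
  also have "\<dots> = (\<Sum>k\<in>V. (cmod (U $$ (k,i)))^2 * (\<Sum>a<2. M (rv j i) a (qv k) * g ((cval k + a) mod 2^l) a))"
  proof (rule sum.cong[OF refl])
    fix k assume k: "k \<in> V"
    have qq: "qk k = qv k" using k by (simp add: V_def)
    have "(\<Sum>s<2^w. F k s) = (\<Sum>a<2. \<Sum>r<D. F k (a * D + r))" unfolding wD by (rule sum_split2)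
    also have "\<dots> = (\<Sum>a<2. \<Sum>r<D. (cmod (U $$ (k,i)))^2 * ((cmod (Q $$ (a * D + r, qv k * D + rv j i)))^2 *
        g ((cval k + a) mod 2^l) a))"
    proof (intro sum.cong refl)
      fix a r assume a: "a \<in> {..<(2::nat)}" and r: "r \<in> {..<D}"
      have "ad (a * D + r) = a" using a r by (simp add: ad_def D_def)
      thus "F k (a * D + r) = (cmod (U $$ (k,i)))^2 * ((cmod (Q $$ (a * D + r, qv k * D + rv j i)))^2 *
        g ((cval k + a) mod 2^l) a)"
        by (simp add: F_def cval_Phi qv_Phi qq)
    qed
    also have "\<dots> = (cmod (U $$ (k,i)))^2 * (\<Sum>a<2. M (rv j i) a (qv k) * g ((cval k + a) mod 2^l) a)"
      by (simp add: sum_distrib_left sum_distrib_right M_def D_def mult.commute mult.left_commute)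
    finally show "(\<Sum>s<2^w. F k s) = (cmod (U $$ (k,i)))^2 * (\<Sum>a<2. M (rv j i) a (qv k) * g ((cval k + a) mod 2^l) a)" .
  qed
  also have "\<dots> = (\<Sum>k<2^n. (cmod (U $$ (k,i)))^2 * (\<Sum>a<2. M (rv j i) a (qv k) * g ((cval k + a) mod 2^l) a))"
  proof (rule sum.mono_neutral_left)
    show "finite {..<(2::nat)^n}" by simp
    show "V \<subseteq> {..<2^n}" by (auto simp: V_def)
    show "\<forall>k\<in>{..<2^n} - V. (cmod (U $$ (k,i)))^2 * (\<Sum>a<2. M (rv j i) a (qv k) * g ((cval k + a) mod 2^l) a) = 0"
      using inv_conseq(1)[OF inv] by auto
  qed
  finally show ?thesis .
qed

end


primrec chainG :: "(nat \<Rightarrow> (nat \<Rightarrow> nat \<Rightarrow> real) \<Rightarrow> (nat \<Rightarrow> nat \<Rightarrow> real)) \<Rightarrow> nat \<Rightarrow>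
    (nat \<Rightarrow> nat \<Rightarrow> real) \<Rightarrow> (nat \<Rightarrow> nat \<Rightarrow> real)" where
  "chainG S 0 f = f"
| "chainG S (Suc t) f = chainG S t (S (Suc t) f)"

definition lin :: "((nat \<Rightarrow> nat \<Rightarrow> real) \<Rightarrow> (nat \<Rightarrow> nat \<Rightarrow> real)) \<Rightarrow> bool" where
  "lin Op \<longleftrightarrow> (\<forall>(Y::nat set) F x. finite Y \<longrightarrow>
      Op (\<lambda>c b. \<Sum>y\<in>Y. x y * F y c b) = (\<lambda>c b. \<Sum>y\<in>Y. x y * Op (F y) c b))"

lemma lin_chainG: "(\<And>j. lin (S j)) \<Longrightarrow> lin (chainG S t)"
proof (induction t)
  case 0 then show ?case by (simp add: lin_def)
next
  case (Suc t)
  show ?case unfolding lin_def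
  proof (intro allI impI)
    fix Y :: "nat set" and F x assume Y: "finite Y"
    have "chainG S (Suc t) (\<lambda>c b. \<Sum>y\<in>Y. x y * F y c b) = chainG S t (\<lambda>c b. \<Sum>y\<in>Y. x y * S (Suc t) (F y) c b)"
      using Suc.prems[of "Suc t"] Y by (simp add: lin_def)
    also have "\<dots> = (\<lambda>c b. \<Sum>y\<in>Y. x y * chainG S t (S (Suc t) (F y)) c b)"
      using Suc.IH[OF Suc.prems] Y by (simp add: lin_def)
    finally show "chainG S (Suc t) (\<lambda>c b. \<Sum>y\<in>Y. x y * F y c b) = (\<lambda>c b. \<Sum>y\<in>Y. x y * chainG S (Suc t) (F y) c b)"
      by simp
  qed
qed

context circ begin

definition "stepop r f = (\<lambda>c b. \<Sum>a<2. M r a b * f ((c + a) mod 2^l) a)"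

lemma lin_stepop: "lin (stepop r)"
  unfolding lin_def stepop_def
  by (auto simp: sum_distrib_left sum_distrib_right mult.commute mult.left_commute intro!: ext sum.swap)

lemma R1_step_carrier: "R1_step w N l Q j \<in> carrier_mat (2^n) (2^n)"
  unfolding R1_step_def n_def[symmetric] by (intro mult_carrier_mat[of _ "2^n" "2^n" _ "2^n"] embed_carrier)

lemma upto_carrier: "R1_upto w N l Q t \<in> carrier_mat (2^n) (2^n)"
proof (induction t)
  case 0 thus ?case by (simp add: n_def[symmetric])
next
  case (Suc t) thus ?case using mult_carrier_mat[OF R1_step_carrier Suc.IH] by simp
qed

lemma per_i:
  assumes "t \<le> 2 * N" "i < 2^n"
  shows "invar (R1_upto w N l Q t) t i \<and> (\<forall>g. (\<Sum>x<2^n. (cmod (R1_upto w N l Q t $$ (x,i)))^2 * g (cval x) (qv x))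
            = chainG (\<lambda>j. stepop (rv j i)) t g (cval i) (qv i))"
  using assms(1)
proof (induction t)
  case 0
  have U0: "R1_upto w N l Q 0 = 1\<^sub>m (2^n)" by (simp add: n_def)
  have inv: "invar (R1_upto w N l Q 0) 0 i"
    unfolding invar_def U0 using assms(2) by (auto simp: index_one_mat split: if_splits)
  have "\<And>g. (\<Sum>x<2^n. (cmod (R1_upto w N l Q 0 $$ (x,i)))^2 * g (cval x) (qv x)) = g (cval i) (qv i)"
  proof -
    fix g :: "nat \<Rightarrow> nat \<Rightarrow> real"
    have "(\<Sum>x<2^n. (cmod (R1_upto w N l Q 0 $$ (x,i)))^2 * g (cval x) (qv x)) =
        (cmod (R1_upto w N l Q 0 $$ (i,i)))^2 * g (cval i) (qv i)"
      by (rule sum_collapse1) (use assms(2) in \<open>auto simp: U0 n_def[symmetric]\<close>)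
    also have "\<dots> = g (cval i) (qv i)" using assms(2) by (simp add: U0 n_def[symmetric])
    finally show "?thesis g" .
  qed
  thus ?case using inv by simp
next
  case (Suc t)
  interpret s: stp w N l Q "Suc t" i
    by unfold_locales (use w1 Qc lN l1 Suc.prems assms(2) in auto)
  have IH: "invar (R1_upto w N l Q t) t i"
     "\<And>g. (\<Sum>x<2^n. (cmod (R1_upto w N l Q t $$ (x,i)))^2 * g (cval x) (qv x))
            = chainG (\<lambda>j. stepop (rv j i)) t g (cval i) (qv i)"
    using Suc by auto
  have inv: "invar (R1_upto w N l Q t) (Suc t - 1) i" using IH(1) by simp
  have U: "R1_upto w N l Q (Suc t) = R1_step w N l Q (Suc t) * R1_upto w N l Q t" by simp
  have "invar (R1_upto w N l Q (Suc t)) (Suc t) i"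
    unfolding U by (rule s.inv_step[OF upto_carrier inv])
  moreover have "\<And>g. (\<Sum>x<2^n. (cmod (R1_upto w N l Q (Suc t) $$ (x,i)))^2 * g (cval x) (qv x))
            = chainG (\<lambda>j. stepop (rv j i)) (Suc t) g (cval i) (qv i)"
  proof -
    fix g :: "nat \<Rightarrow> nat \<Rightarrow> real"
    have "(\<Sum>x<2^n. (cmod (R1_upto w N l Q (Suc t) $$ (x,i)))^2 * g (cval x) (qv x)) =
       (\<Sum>k<2^n. (cmod (R1_upto w N l Q t $$ (k,i)))^2 * stepop (rv (Suc t) i) g (cval k) (qv k))"
      unfolding U s.sum_step[OF upto_carrier inv] by (simp add: stepop_def)
    also have "\<dots> = chainG (\<lambda>j. stepop (rv j i)) (Suc t) g (cval i) (qv i)"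
      using IH(2) by simp
    finally show "?thesis g" .
  qed
  ultimately show ?case by blast
qed

end


lemma chainG_cong: "(\<And>j f. 1 \<le> j \<Longrightarrow> j \<le> t \<Longrightarrow> S j f = S' j f) \<Longrightarrow> chainG S t f = chainG S' t f"
  by (induction t arbitrary: f) auto

context circ begin

definition "setR J r i = mk n (\<lambda>p. if base J \<le> p \<and> p < base J + (w-1) then qbit (w-1) (p - base J) r else qbit n p i)"

lemma setR_less: "setR J r i < 2^n"
  unfolding setR_def by (rule mk_less) auto

lemma qbit_setR: "p < n \<Longrightarrow> qbit n p (setR J r i) =
  (if base J \<le> p \<and> p < base J + (w-1) then qbit (w-1) (p - base J) r else qbit n p i)"
  unfolding setR_def by (rule qbit_mk) auto

lemma base_mono: "1 \<le> j \<Longrightarrow> j < J \<Longrightarrow> base j + w \<le> base J"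
proof -
  assume a: "1 \<le> j" "j < J"
  have "(j - 1) * w + w = j * w" using a by (cases j) auto
  also have "\<dots> \<le> (J - 1) * w" using a by (intro mult_le_mono1) simp
  finally show ?thesis by (simp add: base_def)
qed

lemma lbase: "1 \<le> J \<Longrightarrow> l < base J" by (simp add: base_def)

lemma cval_setR: "1 \<le> J \<Longrightarrow> cval (setR J r i) = cval i"
  using lbase[of J] l_less_n by (subst cval_eq_iff) (auto simp: cval_less qbit_setR qbit_cval)

lemma qv_setR: "1 \<le> J \<Longrightarrow> qv (setR J r i) = qv i"
  using lbase[of J] l_less_n by (simp add: qv_def qbit_setR)

lemma q0_setR: "1 \<le> J \<Longrightarrow> qbit n 0 (setR J r i) = qbit n 0 i"
  using lbase[of J] l_less_n by (simp add: qbit_setR)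

lemma rv_setR: "1 \<le> J \<Longrightarrow> J \<le> 2 * N \<Longrightarrow> r < 2^(w-1) \<Longrightarrow> rv J (setR J r i) = r"
  using base_bounds[of J] by (subst rv_eq_iff) (auto simp: qbit_setR)

lemma rv_setR_other: "1 \<le> j \<Longrightarrow> j < J \<Longrightarrow> J \<le> 2 * N \<Longrightarrow> rv j (setR J r i) = rv j i"
proof (subst rv_eq_iff)
  assume a: "1 \<le> j" "j < J" "J \<le> 2 * N"
  show "rv j i < 2^(w-1)" by (rule rv_less)
  show "\<forall>t<w - 1. qbit n (base j + t) (setR J r i) = qbit (w - 1) t (rv j i)"
    using base_mono[OF a(1,2)] base_bounds[of J] a qbit_rv[of _ j i] by (auto simp: qbit_setR)
qed

lemma setR_setR: "setR J r (setR J r' k) = setR J r k"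
  by (rule qbit_eq[OF setR_less setR_less]) (simp add: qbit_setR)

lemma setR_id: "1 \<le> J \<Longrightarrow> J \<le> 2 * N \<Longrightarrow> i < 2^n \<Longrightarrow> setR J (rv J i) k = setR J (rv J i) i \<Longrightarrow> True"
  by simp

lemma setR_rv: "1 \<le> J \<Longrightarrow> J \<le> 2 * N \<Longrightarrow> i < 2^n \<Longrightarrow> setR J (rv J i) i = i"
proof (rule qbit_eq[OF setR_less])
  assume a: "1 \<le> J" "J \<le> 2 * N" "i < 2^n"
  show "i < 2^n" by (rule a(3))
  show "\<forall>p<n. qbit n p (setR J (rv J i) i) = qbit n p i"
  proof (intro allI impI)
    fix p assume p: "p < n"
    show "qbit n p (setR J (rv J i) i) = qbit n p i"
    proof (cases "base J \<le> p \<and> p < base J + (w-1)")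
      case True
      hence "p = base J + (p - base J)" "p - base J < w - 1" by auto
      thus ?thesis using True p qbit_rv[of "p - base J" J i] by (simp add: qbit_setR)
    next
      case False thus ?thesis using p by (auto simp: qbit_setR)
    qed
  qed
qed

lemma n_ge1: "n \<ge> 1" by (simp add: n_def')

lemma lowhalf: "i < 2^n \<Longrightarrow> (i < 2^(n-1) \<longleftrightarrow> qbit n 0 i = 0)"
proof -
  assume i: "i < 2^n"
  have e: "(2::nat)^n = 2 * 2^(n-1)" using n_ge1 by (cases n) auto
  have "i div 2^(n-1) < 2" using i e by (simp add: split_div)
  thus ?thesis by (auto simp: qbit_def div_eq_0_iff)
qed

lemma AV1:
  fixes H :: "nat \<Rightarrow> real"
  assumes J: "1 \<le> J" "J \<le> 2 * N"
  shows "(\<Sum>i<2^(n-1). H i) = (\<Sum>k\<in>{i. i < 2^(n-1) \<and> rv J i = 0}. \<Sum>r<2^(w-1). H (setR J r k))"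
proof -
  have nn: "(2::nat)^(n-1) \<le> 2^n" by simp
  have inA: "\<And>r k. k < 2^(n-1) \<Longrightarrow> setR J r k < 2^(n-1)"
  proof -
    fix r k assume k: "k < (2::nat)^(n-1)"
    hence "k < 2^n" using nn by linarith
    hence "qbit n 0 k = 0" using k lowhalf by blast
    hence "qbit n 0 (setR J r k) = 0" using q0_setR[OF J(1)] by simp
    thus "setR J r k < 2^(n-1)" using lowhalf[OF setR_less] by blast
  qed
  have "(\<Sum>i<2^(n-1). H i) = (\<Sum>(k,r)\<in>{i. i < 2^(n-1) \<and> rv J i = 0} \<times> {..<2^(w-1)}. H (setR J r k))"
  proof (rule sum.reindex_bij_witness[of _ "\<lambda>(k,r). setR J r k" "\<lambda>i. (setR J 0 i, rv J i)"])
    fix i assume i: "i \<in> {..<(2::nat)^(n-1)}"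
    hence i': "i < 2^n" using nn by (meson lessThan_iff less_le_trans)
    show "(case (setR J 0 i, rv J i) of (k, r) \<Rightarrow> setR J r k) = i"
      using setR_setR setR_rv[OF J i'] by simp
    show "(setR J 0 i, rv J i) \<in> {i. i < 2^(n-1) \<and> rv J i = 0} \<times> {..<2^(w-1)}"
      using i inA rv_setR[OF J, of 0] rv_less by auto
    show "(case (setR J 0 i, rv J i) of (k, r) \<Rightarrow> H (setR J r k)) = H i"
      using setR_setR setR_rv[OF J i'] by simp
  next
    fix b assume b: "b \<in> {i. i < 2^(n-1) \<and> rv J i = 0} \<times> {..<(2::nat)^(w-1)}"
    then obtain k r where kr: "b = (k,r)" "k < 2^(n-1)" "rv J k = 0" "r < 2^(w-1)" by auto
    have k': "k < 2^n" using kr nn by linarith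
    have "setR J 0 (setR J r k) = k" using setR_setR setR_rv[OF J k'] kr by simp
    thus "(setR J 0 (case b of (k, r) \<Rightarrow> setR J r k), rv J (case b of (k, r) \<Rightarrow> setR J r k)) = b"
      using kr rv_setR[OF J] by simp
    show "(case b of (k, r) \<Rightarrow> setR J r k) \<in> {..<2^(n-1)}" using kr inA by simp
  qed
  also have "\<dots> = (\<Sum>k\<in>{i. i < 2^(n-1) \<and> rv J i = 0}. \<Sum>r<2^(w-1). H (setR J r k))"
    by (rule sum.cartesian_product[symmetric])
  finally show ?thesis .
qed

lemma AV:
  fixes G :: "nat \<Rightarrow> real"
  assumes J: "1 \<le> J" "J \<le> 2 * N"
  shows "(\<Sum>i<2^(n-1). G i) = (\<Sum>r<2^(w-1). \<Sum>i<2^(n-1). G (setR J r i)) / 2^(w-1)"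
proof -
  define A0 where "A0 = {i. i < 2^(n-1) \<and> rv J i = 0}"
  have "(\<Sum>r<2^(w-1). \<Sum>i<2^(n-1). G (setR J r i)) = (\<Sum>r'<2^(w-1). \<Sum>k\<in>A0. \<Sum>r<2^(w-1). G (setR J r' (setR J r k)))"
    using AV1[OF J] unfolding A0_def by simp
  also have "\<dots> = (\<Sum>r'<2^(w-1). \<Sum>k\<in>A0. 2^(w-1) * G (setR J r' k))"
    by (simp add: setR_setR)
  also have "\<dots> = (\<Sum>k\<in>A0. \<Sum>r'<2^(w-1). 2^(w-1) * G (setR J r' k))"
    by (rule sum.swap)
  also have "\<dots> = 2^(w-1) * (\<Sum>k\<in>A0. \<Sum>r'<2^(w-1). G (setR J r' k))"
    by (simp add: sum_distrib_left)
  also have "\<dots> = 2^(w-1) * (\<Sum>i<2^(n-1). G i)"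
    using AV1[OF J, of G] unfolding A0_def by simp
  finally show ?thesis by simp
qed

end


lemma sum_blocks:
  fixes a E :: nat and F :: "nat \<Rightarrow> 'b::comm_monoid_add"
  shows "(\<Sum>u<a*E. F u) = (\<Sum>c<a. \<Sum>q<E. F (c*E + q))"
proof (induction a)
  case 0 then show ?case by simp
next
  case (Suc a)
  have "(\<Sum>u<Suc a*E. F u) = (\<Sum>u<a*E. F u) + (\<Sum>u\<in>{a*E..<a*E+E}. F u)"
    unfolding lessThan_atLeast0 by (subst sum.atLeastLessThan_concat[symmetric]) (auto simp: add.commute)
  also have "(\<Sum>u\<in>{a*E..<a*E+E}. F u) = (\<Sum>q<E. F (a*E + q))"
    by (rule sum.reindex_bij_witness[of _ "\<lambda>q. a*E + q" "\<lambda>u. u - a*E"]) auto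
  finally show ?case using Suc by simp
qed

context circ begin

definition "Tm a b = (\<Sum>r<2^(w-1). M r a b) / 2^(w-1)"
definition "stepT f = (\<lambda>c b. \<Sum>a<2. Tm a b * f ((c + a) mod 2^l) a)"

lemma stepT_avg: "stepT f = (\<lambda>c b. \<Sum>r<2^(w-1). (1/2^(w-1)) * stepop r f c b)"
proof (intro ext)
  fix c b
  have "(\<Sum>r<2^(w-1). (1/2^(w-1)) * stepop r f c b) =
      (\<Sum>r<2^(w-1). \<Sum>a<2. (1/2^(w-1)) * (M r a b * f ((c + a) mod 2^l) a))"
    by (simp add: stepop_def sum_distrib_left)
  also have "\<dots> = (\<Sum>a<2. \<Sum>r<2^(w-1). (1/2^(w-1)) * (M r a b * f ((c + a) mod 2^l) a))"
    by (rule sum.swap)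
  also have "\<dots> = stepT f c b"
    by (simp add: stepT_def Tm_def sum_distrib_left sum_distrib_right sum_divide_distrib)
  finally show "stepT f c b = (\<Sum>r<2^(w-1). (1/2^(w-1)) * stepop r f c b)" by simp
qed

lemma half_less: "i < 2^(n-1) \<Longrightarrow> i < (2::nat)^n"
  by (meson less_le_trans one_le_numeral power_increasing diff_le_self)

lemma Zrec:
  assumes "t \<le> 2 * N"
  shows "(\<Sum>i<2^(n-1). \<Sum>x<2^n. (cmod (R1_upto w N l Q t $$ (x,i)))^2 * h (cval x) (qv x)) =
         (\<Sum>i<2^(n-1). chainG (\<lambda>_. stepT) t h (cval i) (qv i))"
  using assms
proof (induction t arbitrary: h)
  case 0
  show ?case using per_i[of 0] half_less by (intro sum.cong) auto
next
  case (Suc t)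
  define J where "J = Suc t"
  have J: "1 \<le> J" "J \<le> 2 * N" using Suc.prems by (auto simp: J_def)
  define Om where "Om i f = chainG (\<lambda>j. stepop (rv j i)) t f (cval i) (qv i)" for i f
  have "(\<Sum>i<2^(n-1). \<Sum>x<2^n. (cmod (R1_upto w N l Q (Suc t) $$ (x,i)))^2 * h (cval x) (qv x)) =
        (\<Sum>i<2^(n-1). Om i (stepop (rv J i) h))"
    using per_i[OF Suc.prems] half_less by (intro sum.cong) (auto simp: Om_def J_def)
  also have "\<dots> = (\<Sum>r<2^(w-1). \<Sum>i<2^(n-1). Om (setR J r i) (stepop (rv J (setR J r i)) h)) / 2^(w-1)"
    by (rule AV[OF J])
  also have "\<dots> = (\<Sum>r<2^(w-1). \<Sum>i<2^(n-1). Om i (stepop r h)) / 2^(w-1)"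
  proof -
    have "\<And>r i. r < 2^(w-1) \<Longrightarrow> Om (setR J r i) (stepop (rv J (setR J r i)) h) = Om i (stepop r h)"
    proof -
      fix r i assume r: "r < (2::nat)^(w-1)"
      have "chainG (\<lambda>j. stepop (rv j (setR J r i))) t (stepop r h) = chainG (\<lambda>j. stepop (rv j i)) t (stepop r h)"
        by (rule chainG_cong) (use rv_setR_other J in \<open>auto simp: J_def\<close>)
      thus "Om (setR J r i) (stepop (rv J (setR J r i)) h) = Om i (stepop r h)"
        unfolding Om_def rv_setR[OF J r] cval_setR[OF J(1)] qv_setR[OF J(1)] by simp
    qed
    thus ?thesis by (auto intro!: sum.cong)
  qed
  also have "\<dots> = (\<Sum>i<2^(n-1). \<Sum>r<2^(w-1). (1/2^(w-1)) * Om i (stepop r h))"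
    by (subst sum.swap) (simp add: sum_divide_distrib sum_distrib_left)
  also have "\<dots> = (\<Sum>i<2^(n-1). Om i (stepT h))"
  proof (rule sum.cong[OF refl])
    fix i
    have l: "lin (chainG (\<lambda>j. stepop (rv j i)) t)" by (rule lin_chainG) (rule lin_stepop)
    have "chainG (\<lambda>j. stepop (rv j i)) t (\<lambda>c b. \<Sum>r<2^(w-1). (1/2^(w-1)) * stepop r h c b) =
         (\<lambda>c b. \<Sum>r<2^(w-1). (1/2^(w-1)) * chainG (\<lambda>j. stepop (rv j i)) t (stepop r h) c b)"
      using l[unfolded lin_def, rule_format, of "{..<2^(w-1)}" "\<lambda>_. 1/2^(w-1)" "\<lambda>r. stepop r h"] by simp
    thus "(\<Sum>r<2^(w-1). (1/2^(w-1)) * Om i (stepop r h)) = Om i (stepT h)"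
      unfolding Om_def stepT_avg by simp
  qed
  also have "\<dots> = (\<Sum>i<2^(n-1). \<Sum>x<2^n. (cmod (R1_upto w N l Q t $$ (x,i)))^2 * stepT h (cval x) (qv x))"
    using per_i[of t] Suc.prems half_less by (intro sum.cong) (auto simp: Om_def)
  also have "\<dots> = (\<Sum>i<2^(n-1). chainG (\<lambda>_. stepT) t (stepT h) (cval i) (qv i))"
    using Suc by simp
  finally show ?case by simp
qed

lemma cval_div: "i < 2^n \<Longrightarrow> cval i = i div 2^(n-l)"
proof -
  assume i: "i < 2^n"
  have nl: "n - l + l = n" using l_less_n by simp
  have lt: "i div 2^(n-l) < 2^l" using i nl
    by (metis less_mult_imp_div_less power_add mult.commute)
  show ?thesis
  proof (subst cval_eq_iff[OF lt], intro allI impI)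
    fix p assume p: "p < l"
    have "n - 1 - p = (n - l) + (l - 1 - p)" using p l_less_n by simp
    thus "qbit n p i = qbit l p (i div 2^(n-l))"
      by (simp add: qbit_def power_add div_mult2_eq)
  qed
qed

lemma count:
  fixes h :: "nat \<Rightarrow> nat \<Rightarrow> real"
  shows "(\<Sum>i<2^(n-1). h (cval i) (qv i)) = 2^(n-l-1) * (\<Sum>c<N. \<Sum>q<2. h c q)"
proof -
  define E where "E = (2::nat)^(n-l-1)"
  have nl: "n - l = Suc (n - l - 1)" using l_less_n by simp
  have e1: "(2::nat)^(n-1) = (N*2) * E"
  proof -
    have "n - 1 = l + (n - l - 1)" using l_less_n l1 by simp
    thus ?thesis unfolding E_def using lN by (simp add: power_add)
  qed
  have e2: "(2::nat)^(n-l) = E * 2" unfolding E_def using nl by (metis power_Suc mult.commute)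
  have "(\<Sum>i<2^(n-1). h (cval i) (qv i)) = (\<Sum>i<(N*2)*E. h (i div E div 2) (i div E mod 2))"
  proof (rule sum.cong)
    show "{..<2^(n-1)} = {..<(N*2)*E}" using e1 by simp
    fix i assume "i \<in> {..<(N*2)*E}"
    hence "i < 2^n" using e1 half_less by simp
    thus "h (cval i) (qv i) = h (i div E div 2) (i div E mod 2)"
      unfolding cval_div[OF \<open>i < 2^n\<close>] e2 qv_def qbit_def E_def by (simp add: div_mult2_eq)
  qed
  also have "\<dots> = (\<Sum>u<N*2. \<Sum>q<E. h ((u*E + q) div E div 2) ((u*E + q) div E mod 2))"
    by (rule sum_blocks)
  also have "\<dots> = (\<Sum>u<N*2. real E * h (u div 2) (u mod 2))"
    by (intro sum.cong refl) (simp add: E_def)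
  also have "\<dots> = real E * (\<Sum>c<N. \<Sum>q<2. h ((c*2+q) div 2) ((c*2+q) mod 2))"
    by (simp add: sum_distrib_left sum_blocks)
  also have "\<dots> = real E * (\<Sum>c<N. \<Sum>q<2. h c q)"
    by (intro arg_cong[where f="\<lambda>x. real E * x"] sum.cong refl) auto
  finally show ?thesis by (simp add: E_def)
qed

end


primrec Ex :: "(nat \<Rightarrow> nat \<Rightarrow> real) \<Rightarrow> nat \<Rightarrow> nat \<Rightarrow> (nat \<Rightarrow> nat \<Rightarrow> real) \<Rightarrow> real" where
  "Ex T 0 q g = g 0 q"
| "Ex T (Suc t) q g = Ex T t q (\<lambda>k b. \<Sum>a<2. T a b * g (k + a) a)"

locale chain =
  fixes T :: "nat \<Rightarrow> nat \<Rightarrow> real" and \<delta> :: real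
  assumes Tnn: "\<And>a b. a < 2 \<Longrightarrow> b < 2 \<Longrightarrow> T a b \<ge> 0"
    and Tsum: "\<And>b. b < 2 \<Longrightarrow> (\<Sum>a<2. T a b) = 1"
    and Tdrift: "\<And>b. b < 2 \<Longrightarrow> (\<Sum>a<2. T a b * (2 * real a - 1)) = \<delta> * (2 * real b - 1)"
    and dsmall: "\<bar>\<delta>\<bar> \<le> 1/4"
begin

lemma Ex_mono: "q < 2 \<Longrightarrow> (\<And>k b. b < 2 \<Longrightarrow> g k b \<le> g' k b) \<Longrightarrow> Ex T t q g \<le> Ex T t q g'"
proof (induction t arbitrary: g g')
  case 0 thus ?case by simp
next
  case (Suc t)
  show ?case unfolding Ex.simps
  proof (rule Suc.IH[OF Suc.prems(1)])
    fix k b :: nat assume b: "b < 2"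
    show "(\<Sum>a<2. T a b * g (k + a) a) \<le> (\<Sum>a<2. T a b * g' (k + a) a)"
      using Suc.prems(2) Tnn b by (intro sum_mono mult_left_mono) auto
  qed
qed

lemma Ex_cong: "q < 2 \<Longrightarrow> (\<And>k b. b < 2 \<Longrightarrow> g k b = g' k b) \<Longrightarrow> Ex T t q g = Ex T t q g'"
  by (rule antisym; rule Ex_mono) auto

lemma Ex_lin: "Ex T t q (\<lambda>k b. x * g k b + y * g' k b) = x * Ex T t q g + y * Ex T t q g'"
proof (induction t arbitrary: g g')
  case 0 thus ?case by simp
next
  case (Suc t)
  have "Ex T (Suc t) q (\<lambda>k b. x * g k b + y * g' k b) =
     Ex T t q (\<lambda>k b. x * (\<Sum>a<2. T a b * g (k + a) a) + y * (\<Sum>a<2. T a b * g' (k + a) a))"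
    by (simp add: sum_distrib_left sum.distrib algebra_simps)
  thus ?case using Suc.IH by simp
qed

lemma Ex_sum: "finite Y \<Longrightarrow> Ex T t q (\<lambda>k b. \<Sum>y\<in>Y. F y k b) = (\<Sum>y\<in>Y. Ex T t q (F y))"
proof (induction Y rule: finite_induct)
  case empty
  have "Ex T t q (\<lambda>k b. 0 * (0::real) + 0 * 0) = 0" by (subst Ex_lin) simp
  thus ?case by simp
next
  case (insert y Y)
  have "Ex T t q (\<lambda>k b. \<Sum>y\<in>insert y Y. F y k b) = Ex T t q (\<lambda>k b. 1 * F y k b + 1 * (\<Sum>y\<in>Y. F y k b))"
    using insert by simp
  also have "\<dots> = Ex T t q (F y) + Ex T t q (\<lambda>k b. \<Sum>y\<in>Y. F y k b)" by (subst Ex_lin) simp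
  finally show ?case using insert by simp
qed

lemma Ex_const: "q < 2 \<Longrightarrow> Ex T t q (\<lambda>k b. c) = c"
proof (induction t)
  case 0 thus ?case by simp
next
  case (Suc t)
  have "Ex T (Suc t) q (\<lambda>k b. c) = Ex T t q (\<lambda>k b. c)"
    unfolding Ex.simps by (rule Ex_cong[OF Suc.prems]) (simp add: Tsum flip: sum_distrib_right)
  thus ?case using Suc by simp
qed

lemma Ex_CS: assumes q: "q < 2"
  shows "Ex T t q (\<lambda>k b. \<bar>f k b\<bar>) \<le> sqrt (Ex T t q (\<lambda>k b. (f k b)^2))"
proof -
  define m where "m = Ex T t q (\<lambda>k b. \<bar>f k b\<bar>)"
  define s where "s = Ex T t q (\<lambda>k b. (f k b)^2)"
  have m0: "m \<ge> 0"
  proof -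
    have "Ex T t q (\<lambda>k b. 0) \<le> Ex T t q (\<lambda>k b. \<bar>f k b\<bar>)" by (rule Ex_mono[OF q]) auto
    thus ?thesis using Ex_const[OF q, of t 0] by (simp add: m_def)
  qed
  have "0 \<le> Ex T t q (\<lambda>k b. (\<bar>f k b\<bar> - m)^2)"
  proof -
    have "Ex T t q (\<lambda>k b. 0) \<le> Ex T t q (\<lambda>k b. (\<bar>f k b\<bar> - m)^2)" by (rule Ex_mono[OF q]) auto
    thus ?thesis using Ex_const[OF q, of t 0] by simp
  qed
  also have "Ex T t q (\<lambda>k b. (\<bar>f k b\<bar> - m)^2) =
      Ex T t q (\<lambda>k b. 1 * (f k b)^2 + (-2*m) * \<bar>f k b\<bar>) + m^2"
  proof -
    have "Ex T t q (\<lambda>k b. (\<bar>f k b\<bar> - m)^2) = Ex T t q (\<lambda>k b. 1 * (1 * (f k b)^2 + (-2*m) * \<bar>f k b\<bar>) + m^2 * 1)"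
      by (rule arg_cong[where f="Ex T t q"]) (auto simp: power2_eq_square algebra_simps intro!: ext)
    thus ?thesis by (subst (asm) Ex_lin) (simp add: Ex_const[OF q])
  qed
  also have "\<dots> = s - 2 * m * m + m^2" by (subst Ex_lin) (simp add: s_def m_def)
  finally have "m^2 \<le> s" by (simp add: power2_eq_square)
  thus ?thesis using m0 by (simp add: m_def s_def real_le_rsqrt)
qed

definition "m1 q t = Ex T t q (\<lambda>k b. (2 * real b - 1) * (2 * real k - real t))"
definition "m2 q t = Ex T t q (\<lambda>k b. (2 * real k - real t)^2)"

lemma a01: "a < (2::nat) \<Longrightarrow> (2 * real a - 1)^2 = 1"
  by (cases a) (auto simp: less_Suc_eq)

lemma m1_rec: "q < 2 \<Longrightarrow> m1 q (Suc t) = \<delta> * m1 q t + 1"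
proof -
  assume q: "q < 2"
  have "m1 q (Suc t) = Ex T t q (\<lambda>k b. \<Sum>a<2. T a b * ((2 * real a - 1) * ((2 * real k - real t) + (2 * real a - 1))))"
    unfolding m1_def by (simp add: algebra_simps)
  also have "\<dots> = Ex T t q (\<lambda>k b. \<delta> * ((2 * real b - 1) * (2 * real k - real t)) + 1 * 1)"
  proof (rule Ex_cong[OF q])
    fix k b :: nat assume b: "b < 2"
    have "(\<Sum>a<2. T a b * ((2 * real a - 1) * ((2 * real k - real t) + (2 * real a - 1)))) =
        (2 * real k - real t) * (\<Sum>a<2. T a b * (2 * real a - 1)) + (\<Sum>a<2. T a b * (2 * real a - 1)^2)"
      by (simp add: sum_distrib_left sum.distrib[symmetric] algebra_simps power2_eq_square)
    also have "(\<Sum>a<2. T a b * (2 * real a - 1)^2) = (\<Sum>a<2. T a b)"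
      by (rule sum.cong) (auto simp: a01)
    also have "(2 * real k - real t) * (\<Sum>a<2. T a b * (2 * real a - 1)) + (\<Sum>a<2. T a b) =
        \<delta> * ((2 * real b - 1) * (2 * real k - real t)) + 1 * 1"
      unfolding Tdrift[OF b] Tsum[OF b] by (simp add: algebra_simps)
    finally show "(\<Sum>a<2. T a b * ((2 * real a - 1) * ((2 * real k - real t) + (2 * real a - 1)))) =
        \<delta> * ((2 * real b - 1) * (2 * real k - real t)) + 1 * 1" .
  qed
  also have "\<dots> = \<delta> * m1 q t + 1"
    by (subst Ex_lin) (simp add: Ex_const[OF q] m1_def)
  finally show ?thesis .
qed

lemma m2_rec: "q < 2 \<Longrightarrow> m2 q (Suc t) = m2 q t + 2 * \<delta> * m1 q t + 1"
proof -
  assume q: "q < 2"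
  have "m2 q (Suc t) = Ex T t q (\<lambda>k b. \<Sum>a<2. T a b * ((2 * real k - real t) + (2 * real a - 1))^2)"
    unfolding m2_def by (simp add: algebra_simps)
  also have "\<dots> = Ex T t q (\<lambda>k b. 1 * (2 * real k - real t)^2 + (2 * \<delta>) * ((2 * real b - 1) * (2 * real k - real t)) + 1)"
  proof (rule Ex_cong[OF q])
    fix k b :: nat assume b: "b < 2"
    have "(\<Sum>a<2. T a b * ((2 * real k - real t) + (2 * real a - 1))^2) =
        (2 * real k - real t)^2 * (\<Sum>a<2. T a b) + 2 * (2 * real k - real t) * (\<Sum>a<2. T a b * (2 * real a - 1))
        + (\<Sum>a<2. T a b * (2 * real a - 1)^2)"
      by (simp add: sum_distrib_left sum.distrib[symmetric] algebra_simps power2_eq_square)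
    also have "(\<Sum>a<2. T a b * (2 * real a - 1)^2) = (\<Sum>a<2. T a b)"
      by (rule sum.cong) (auto simp: a01)
    also have "(2 * real k - real t)^2 * (\<Sum>a<2. T a b) + 2 * (2 * real k - real t) * (\<Sum>a<2. T a b * (2 * real a - 1))
        + (\<Sum>a<2. T a b) = 1 * (2 * real k - real t)^2 + (2 * \<delta>) * ((2 * real b - 1) * (2 * real k - real t)) + 1"
      unfolding Tdrift[OF b] Tsum[OF b] by (simp add: algebra_simps)
    finally show "(\<Sum>a<2. T a b * ((2 * real k - real t) + (2 * real a - 1))^2) =
        1 * (2 * real k - real t)^2 + (2 * \<delta>) * ((2 * real b - 1) * (2 * real k - real t)) + 1" .
  qed
  also have "\<dots> = m2 q t + 2 * \<delta> * m1 q t + 1"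
  proof -
    have "Ex T t q (\<lambda>k b. 1 * (2 * real k - real t)^2 + (2 * \<delta>) * ((2 * real b - 1) * (2 * real k - real t)) + 1)
       = Ex T t q (\<lambda>k b. 1 * (1 * (2 * real k - real t)^2 + (2 * \<delta>) * ((2 * real b - 1) * (2 * real k - real t))) + 1 * 1)"
      by simp
    also have "\<dots> = m2 q t + 2 * \<delta> * m1 q t + 1"
      by (simp only: Ex_lin Ex_const[OF q]) (simp add: m1_def m2_def)
    finally show ?thesis .
  qed
  finally show ?thesis .
qed

lemma moments: "q < 2 \<Longrightarrow> \<bar>m1 q t\<bar> \<le> 4/3 \<and> m2 q t \<le> 5/3 * real t"
proof (induction t)
  case 0 thus ?case by (simp add: m1_def m2_def)
next
  case (Suc t)
  have h: "\<bar>m1 q t\<bar> \<le> 4/3" "m2 q t \<le> 5/3 * real t" using Suc by auto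
  have p: "\<bar>\<delta> * m1 q t\<bar> \<le> 1/3"
  proof -
    have "\<bar>\<delta> * m1 q t\<bar> = \<bar>\<delta>\<bar> * \<bar>m1 q t\<bar>" by (simp add: abs_mult)
    also have "\<dots> \<le> 1/4 * (4/3)" using dsmall h(1) by (intro mult_mono) auto
    finally show ?thesis by simp
  qed
  have "\<bar>m1 q (Suc t)\<bar> \<le> 4/3" using m1_rec[OF Suc.prems] p by simp
  moreover have "m2 q (Suc t) \<le> 5/3 * real (Suc t)" using m2_rec[OF Suc.prems] p h(2) by (simp add: abs_le_iff)
  ultimately show ?case by simp
qed

end


lemma ind_count:
  fixes N k :: nat assumes N: "N \<ge> 1"
  shows "(\<Sum>c<N. (if (c + k) mod (2*N) < N then 1 else 0 :: real)) \<le> \<bar>real k - real N\<bar>"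
proof -
  have eq: "(\<Sum>c<N. (if (c + k) mod (2*N) < N then 1 else 0 :: real)) = real (card {c. c < N \<and> (c + k) mod (2*N) < N})"
    by (simp add: sum.If_cases Int_def)
  consider "k < N" | "N \<le> k \<and> k < 2*N" | "2*N \<le> k" by linarith
  thus ?thesis
  proof cases
    case 1
    have "{c. c < N \<and> (c + k) mod (2*N) < N} = {..<N-k}"
    proof -
      have "\<And>c. c < N \<Longrightarrow> (c + k) mod (2*N) = c + k" using 1 by simp
      thus ?thesis using 1 by auto
    qed
    thus ?thesis unfolding eq using 1 by simp
  next
    case 2
    have "{c. c < N \<and> (c + k) mod (2*N) < N} = {2*N-k..<N}"
    proof -
      have "\<And>c. c < N \<Longrightarrow> (c + k) mod (2*N) = (if c + k < 2*N then c + k else c + k - 2*N)"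
        using 2 by (auto simp: mod_if)
      thus ?thesis using 2 by (auto split: if_splits)
    qed
    thus ?thesis unfolding eq using 2 by simp
  next
    case 3
    have "card {c. c < N \<and> (c + k) mod (2*N) < N} \<le> card {..<N}" by (rule card_mono) auto
    thus ?thesis unfolding eq using 3 by simp
  qed
qed

lemma final_real: "(x::real) \<ge> 1 \<Longrightarrow> sqrt (5 * x / 6) / x < x powr (-1/3)"
proof -
  assume x: "x \<ge> 1"
  define y where "y = x powr (1/3)"
  have y1: "y \<ge> 1" using x by (simp add: y_def ge_one_powr_ge_zero)
  have y3: "y^3 = x" using x by (simp add: y_def powr_realpow[symmetric] powr_powr)
  have xm: "x powr (-1/3) = 1 / y" using x by (simp add: y_def powr_minus_divide)
  have "5 * y^2 < 6 * y^3" using y1 by (simp add: power2_eq_square power3_eq_cube mult_strict_right_mono)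
  hence a: "5 * (y * y) < 6 * x" using y3 by (simp add: power2_eq_square power3_eq_cube)
  have b: "x * (5 * (y * y)) < x * (6 * x)" using a x by (intro mult_strict_left_mono) auto
  have "5 * x / 6 < (x / y)^2" using b y1 by (simp add: power2_eq_square field_simps)
  hence "sqrt (5 * x / 6) < sqrt ((x / y)^2)" by (rule real_sqrt_less_mono)
  hence "sqrt (5 * x / 6) < x / y" using y1 x by simp
  thus ?thesis using xm x by (simp add: field_simps)
qed



context circ begin

lemma Qdims: "dim_row Q = 2^w" "dim_col Q = 2^w" using Qc by auto

lemma cnj_mult_self: "cnj z * z = (complex_of_real (cmod z))^2"
  by (metis complex_norm_square mult.commute of_real_power)

lemma mult_cnj_self: "z * cnj z = (complex_of_real (cmod z))^2"
  by (metis complex_norm_square of_real_power)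

lemma col_norm: assumes U: "unitary_mat Q" and y: "y < 2^w"
  shows "(\<Sum>x<2^w. (cmod (Q $$ (x,y)))^2) = 1"
proof -
  have aQ: "adj Q \<in> carrier_mat (2^w) (2^w)" using Qdims by (simp add: adj_def)
  have "adj Q * Q = 1\<^sub>m (2^w)" using U Qdims by (simp add: unitary_mat_def)
  hence "(adj Q * Q) $$ (y,y) = 1" using y by simp
  moreover have "(adj Q * Q) $$ (y,y) = (\<Sum>x<2^w. adj Q $$ (y,x) * Q $$ (x,y))"
    using aQ Qc y by (intro mult_entry) auto
  moreover have "\<And>x. x < 2^w \<Longrightarrow> adj Q $$ (y,x) * Q $$ (x,y) = complex_of_real ((cmod (Q $$ (x,y)))^2)"
    using y Qdims by (simp add: adj_def cnj_mult_self)
  ultimately have "(\<Sum>x<2^w. complex_of_real ((cmod (Q $$ (x,y)))^2)) = 1" by simp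
  hence "complex_of_real (\<Sum>x<2^w. (cmod (Q $$ (x,y)))^2) = 1" by simp
  thus ?thesis by (metis of_real_eq_1_iff)
qed

lemma row_norm: assumes U: "unitary_mat Q" and x: "x < 2^w"
  shows "(\<Sum>y<2^w. (cmod (Q $$ (x,y)))^2) = 1"
proof -
  have aQ: "adj Q \<in> carrier_mat (2^w) (2^w)" using Qdims by (simp add: adj_def)
  have "Q * adj Q = 1\<^sub>m (2^w)" using U Qdims by (simp add: unitary_mat_def)
  hence "(Q * adj Q) $$ (x,x) = 1" using x by simp
  moreover have "(Q * adj Q) $$ (x,x) = (\<Sum>y<2^w. Q $$ (x,y) * adj Q $$ (y,x))"
    using aQ Qc x by (intro mult_entry) auto
  moreover have "\<And>y. y < 2^w \<Longrightarrow> Q $$ (x,y) * adj Q $$ (y,x) = complex_of_real ((cmod (Q $$ (x,y)))^2)"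
    using x Qdims by (simp add: adj_def mult_cnj_self)
  ultimately have "(\<Sum>y<2^w. complex_of_real ((cmod (Q $$ (x,y)))^2)) = 1" by simp
  hence "complex_of_real (\<Sum>y<2^w. (cmod (Q $$ (x,y)))^2) = 1" by simp
  thus ?thesis by (metis of_real_eq_1_iff)
qed

lemma wD: "(2::nat)^w = 2 * 2^(w-1)" using w1 by (cases w) auto

lemma Tm_nn: "Tm a b \<ge> 0" by (simp add: Tm_def M_def sum_nonneg)

lemma Tm_colsum: assumes U: "unitary_mat Q" and b: "b < 2"
  shows "(\<Sum>a<2. Tm a b) = 1"
proof -
  define D where "D = (2::nat)^(w-1)"
  have "\<And>r. r < D \<Longrightarrow> (\<Sum>a<2. M r a b) = 1"
  proof -
    fix r assume r: "r < D"
    have "(\<Sum>a<2. M r a b) = (\<Sum>x<2*D. (cmod (Q $$ (x, b * D + r)))^2)"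
      by (simp add: M_def sum_split2 D_def)
    also have "\<dots> = 1"
    proof -
      have "b * D + r < 2 * D" using b r by (cases "b = 0") (auto dest: bit_cases)
      thus ?thesis using col_norm[OF U] wD by (simp add: D_def)
    qed
    finally show "(\<Sum>a<2. M r a b) = 1" .
  qed
  hence "(\<Sum>r<D. \<Sum>a<2. M r a b) = D" by simp
  hence "(\<Sum>a<2. \<Sum>r<D. M r a b) = D" by (subst sum.swap)
  thus ?thesis by (simp add: Tm_def D_def flip: sum_divide_distrib)
qed

lemma Tm_rowsum: assumes U: "unitary_mat Q"
  shows "(\<Sum>b<2. Tm 0 b) = 1"
proof -
  define D where "D = (2::nat)^(w-1)"
  have "(\<Sum>b<2. \<Sum>r<D. M r 0 b) = (\<Sum>b<2. \<Sum>r<D. \<Sum>r'<D. (cmod (Q $$ (r', b * D + r)))^2)"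
    by (simp add: M_def D_def)
  also have "\<dots> = (\<Sum>y<2*D. \<Sum>r'<D. (cmod (Q $$ (r', y)))^2)"
    by (simp add: sum_split2)
  also have "\<dots> = (\<Sum>r'<D. \<Sum>y<2*D. (cmod (Q $$ (r', y)))^2)"
    by (rule sum.swap)
  also have "\<dots> = (\<Sum>r'<D. 1)"
    using row_norm[OF U] wD by (intro sum.cong refl) (auto simp: D_def)
  finally have "(\<Sum>b<2. \<Sum>r<D. M r 0 b) = D" by simp
  thus ?thesis by (simp add: Tm_def D_def flip: sum_divide_distrib)
qed

lemma Tm00: assumes U: "unitary_mat Q" shows "Tm 0 0 = p_acc w Q 1"
proof -
  define D where "D = (2::nat)^(w-1)"
  have "p_acc w Q 1 = (\<Sum>i<D. \<Sum>x<2^w. if qbit w 0 x = 0 then (cmod (Q $$ (x,i)))^2 else 0) / D"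
    using p_acc_formula[OF Qc w1] by (simp add: D_def)
  also have "\<dots> = (\<Sum>i<D. \<Sum>x<D. (cmod (Q $$ (x,i)))^2) / D"
  proof -
    have "\<And>i. (\<Sum>x<2^w. if qbit w 0 x = 0 then (cmod (Q $$ (x,i)))^2 else 0) = (\<Sum>x<D. (cmod (Q $$ (x,i)))^2)"
    proof -
      fix i
      have "(\<Sum>x<2^w. if qbit w 0 x = 0 then (cmod (Q $$ (x,i)))^2 else 0) =
            (\<Sum>x<2*D. if x < D then (cmod (Q $$ (x,i)))^2 else 0)"
      proof (rule sum.cong)
        show "{..<2^w} = {..<2*D}" using wD by (simp add: D_def)
        fix x assume "x \<in> {..<2*D}"
        hence "x div D < 2" by (simp add: split_div)
        hence "qbit w 0 x = 0 \<longleftrightarrow> x < D" by (auto simp: qbit_def D_def div_eq_0_iff)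
        thus "(if qbit w 0 x = 0 then (cmod (Q $$ (x,i)))^2 else 0) = (if x < D then (cmod (Q $$ (x,i)))^2 else 0)" by simp
      qed
      also have "\<dots> = (\<Sum>x\<in>{x\<in>{..<2*D}. x < D}. (cmod (Q $$ (x,i)))^2)"
        by (subst sum.inter_filter) auto
      also have "{x\<in>{..<2*D}. x < D} = {..<D}" by auto
      finally show "?thesis i" by simp
    qed
    thus ?thesis by simp
  qed
  also have "\<dots> = Tm 0 0" by (simp add: Tm_def M_def D_def)
  finally show ?thesis by simp
qed

lemma chainT_Ex: "c < 2^l \<Longrightarrow> chainG (\<lambda>_. stepT) t h c q = Ex Tm t q (\<lambda>k a. h ((c + k) mod 2^l) a)"
proof (induction t arbitrary: h)
  case 0 thus ?case by simp
next
  case (Suc t)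
  have "chainG (\<lambda>_. stepT) (Suc t) h c q = Ex Tm t q (\<lambda>k b. stepT h ((c + k) mod 2^l) b)"
    using Suc by simp
  also have "\<dots> = Ex Tm (Suc t) q (\<lambda>k a. h ((c + k) mod 2^l) a)"
    by (simp add: stepT_def mod_add_left_eq add.assoc)
  finally show ?case .
qed

end


context circ begin

definition "hacc c q = (if c < N then 1 else 0 :: real)"

lemma N_pos: "N \<ge> 1"
proof -
  have "(2::nat)^l \<ge> 2" using l1 by (metis power_one_right power_increasing one_le_numeral)
  thus ?thesis using lN by simp
qed

lemma hacc_qbit: "x < 2^n \<Longrightarrow> (if qbit n 0 x = 0 then A else 0) = A * hacc (cval x) (qv x)"
proof -
  assume x: "x < 2^n"
  have q: "qbit n 0 x = qbit l 0 (cval x)" using qbit_cval[of 0 x] l1 by simp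
  have "(2::nat)^l = 2 * 2^(l-1)" using l1 by (cases l) auto
  hence lN': "(2::nat)^(l-1) = N" using lN by simp
  have c: "cval x < 2 * N" using cval_less[of x] lN by simp
  hence "cval x div N < 2" using N_pos by (simp add: split_div)
  moreover have "qbit l 0 (cval x) = (cval x div N) mod 2" unfolding qbit_def using lN' by simp
  ultimately have "qbit l 0 (cval x) = 0 \<longleftrightarrow> cval x < N"
    using N_pos by (auto simp: div_eq_0_iff)
  thus ?thesis using q by (simp add: hacc_def)
qed

lemma main_bound:
  assumes U: "unitary_mat Q" and d: "\<bar>2 * Tm 0 0 - 1\<bar> \<le> 1/4"
  shows "p_acc n (R1 w N l Q) 1 \<le> sqrt (5 * real N / 6) / real N"
proof -
  define p where "p = Tm 0 0"
  have T10: "Tm 1 0 = 1 - p" using Tm_colsum[OF U, of 0] by (simp add: p_def numeral_2_eq_2)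
  have T01: "Tm 0 1 = 1 - p" using Tm_rowsum[OF U] by (simp add: p_def numeral_2_eq_2)
  have T11: "Tm 1 1 = p" using Tm_colsum[OF U, of 1] T01 by (simp add: numeral_2_eq_2)
  interpret ch: chain Tm "2 * p - 1"
  proof
    show "\<And>a b. a < 2 \<Longrightarrow> b < 2 \<Longrightarrow> Tm a b \<ge> 0" by (rule Tm_nn)
    show "\<And>b. b < 2 \<Longrightarrow> (\<Sum>a<2. Tm a b) = 1" by (rule Tm_colsum[OF U])
    show "\<And>b. b < 2 \<Longrightarrow> (\<Sum>a<2. Tm a b * (2 * real a - 1)) = (2 * p - 1) * (2 * real b - 1)"
    proof -
      fix b :: nat assume b: "b < 2"
      have s2: "\<And>f::nat\<Rightarrow>real. (\<Sum>a<2. f a) = f 0 + f 1" by (simp add: numeral_2_eq_2)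
      have p0: "Tm 0 0 = p" by (simp add: p_def)
      from b have "b = 0 \<or> b = 1" by arith
      thus "(\<Sum>a<2. Tm a b * (2 * real a - 1)) = (2 * p - 1) * (2 * real b - 1)"
      proof
        assume "b = 0" thus ?thesis unfolding s2 using T10 p0 by simp
      next
        assume "b = 1" thus ?thesis unfolding s2 using T01 T11 by simp
      qed
    qed
    show "\<bar>2 * p - 1\<bar> \<le> 1/4" using d by (simp add: p_def)
  qed
  define U1 where "U1 = R1 w N l Q"
  have U1c: "U1 \<in> carrier_mat (2^n) (2^n)" unfolding U1_def R1_def by (rule upto_carrier)
  have "p_acc n U1 1 = (\<Sum>i<2^(n-1). \<Sum>x<2^n. if qbit n 0 x = 0 then (cmod (U1 $$ (x,i)))^2 else 0) / 2^(n-1)"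
    by (rule p_acc_formula[OF U1c n_ge1])
  also have "\<dots> = (\<Sum>i<2^(n-1). \<Sum>x<2^n. (cmod (U1 $$ (x,i)))^2 * hacc (cval x) (qv x)) / 2^(n-1)"
    by (simp add: hacc_qbit)
  also have "\<dots> = (\<Sum>i<2^(n-1). chainG (\<lambda>_. stepT) (2*N) hacc (cval i) (qv i)) / 2^(n-1)"
    unfolding U1_def R1_def by (subst Zrec) auto
  also have "\<dots> = 2^(n-l-1) * (\<Sum>c<N. \<Sum>q<2. chainG (\<lambda>_. stepT) (2*N) hacc c q) / 2^(n-1)"
    by (subst count) simp
  also have "\<dots> = (\<Sum>c<N. \<Sum>q<2. chainG (\<lambda>_. stepT) (2*N) hacc c q) / (2 * real N)"
  proof -
    have "(2::real)^(n-1) = 2^(n-l-1) * 2^l" using l_less_n by (simp flip: power_add)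
    moreover have "(2::real)^l = 2 * real N"
    proof -
      have "real (2^l) = real (2 * N)" using lN by simp
      thus ?thesis by simp
    qed
    ultimately show ?thesis by simp
  qed
  also have "(\<Sum>c<N. \<Sum>q<2. chainG (\<lambda>_. stepT) (2*N) hacc c q) =
      (\<Sum>q<2. Ex Tm (2*N) q (\<lambda>k a. \<Sum>c<N. hacc ((c + k) mod (2*N)) a))"
  proof -
    have "(\<Sum>c<N. \<Sum>q<2. chainG (\<lambda>_. stepT) (2*N) hacc c q) = (\<Sum>c<N. \<Sum>q<2. Ex Tm (2*N) q (\<lambda>k a. hacc ((c + k) mod (2*N)) a))"
      using lN by (intro sum.cong refl) (simp add: chainT_Ex)
    also have "\<dots> = (\<Sum>q<2. \<Sum>c<N. Ex Tm (2*N) q (\<lambda>k a. hacc ((c + k) mod (2*N)) a))" by (rule sum.swap)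
    also have "\<dots> = (\<Sum>q<2. Ex Tm (2*N) q (\<lambda>k a. \<Sum>c<N. hacc ((c + k) mod (2*N)) a))"
      by (intro sum.cong refl) (rule ch.Ex_sum[symmetric], simp)
    finally show ?thesis .
  qed
  also have "(\<Sum>q<2. Ex Tm (2*N) q (\<lambda>k a. \<Sum>c<N. hacc ((c + k) mod (2*N)) a)) \<le> (\<Sum>q<(2::nat). sqrt (5 * real N / 6))"
  proof (rule sum_mono)
    fix q assume "q \<in> {..<(2::nat)}"
    hence q: "q < 2" by simp
    have "Ex Tm (2*N) q (\<lambda>k a. \<Sum>c<N. hacc ((c + k) mod (2*N)) a) \<le> Ex Tm (2*N) q (\<lambda>k a. \<bar>real k - real N\<bar>)"
      by (rule ch.Ex_mono[OF q]) (use ind_count N_pos in \<open>simp add: hacc_def\<close>)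
    also have "\<dots> \<le> sqrt (Ex Tm (2*N) q (\<lambda>k a. (real k - real N)^2))" by (rule ch.Ex_CS[OF q])
    also have "Ex Tm (2*N) q (\<lambda>k a. (real k - real N)^2) = 1/4 * ch.m2 q (2*N) + 0 * ch.m2 q (2*N)"
    proof -
      have "Ex Tm (2*N) q (\<lambda>k a. (real k - real N)^2) =
          Ex Tm (2*N) q (\<lambda>k a. 1/4 * (2 * real k - real (2*N))^2 + 0 * (2 * real k - real (2*N))^2)"
        by (rule arg_cong[where f="Ex Tm (2*N) q"]) (auto intro!: ext simp: power2_eq_square algebra_simps)
      thus ?thesis by (subst (asm) ch.Ex_lin) (simp add: ch.m2_def)
    qed
    also have "\<dots> \<le> 1/4 * (5/3 * real (2*N))" using ch.moments[OF q, of "2*N"] by simp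
    finally show "Ex Tm (2*N) q (\<lambda>k a. \<Sum>c<N. hacc ((c + k) mod (2*N)) a) \<le> sqrt (5 * real N / 6)"
      by (simp add: real_sqrt_le_iff)
  qed
  finally have "p_acc n U1 1 \<le> (2 * sqrt (5 * real N / 6)) / (2 * real N)"
    using N_pos by (simp add: divide_right_mono)
  thus ?thesis using N_pos by (simp add: U1_def)
qed

end


theorem proposition14:
  fixes Q :: "complex mat" and w N m :: nat and \<epsilon> :: real
  assumes "w \<ge> 1"
    and "Q \<in> carrier_mat (2 ^ w) (2 ^ w)" and "unitary_mat Q"
    and "N = 2 ^ m" and "N \<ge> 64"
    and "0 \<le> \<epsilon>" and "\<epsilon> \<le> 1 / 8"
    and "3 * real N powr (-1/3) + 4 * \<epsilon> \<le> 1"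
    and "1 / 2 - \<epsilon> \<le> p_acc w Q 1" and "p_acc w Q 1 \<le> 1 / 2 + \<epsilon>"
  shows "p_acc (R1_qubits w N (m + 1)) (R1 w N (m + 1) Q) 1 < 3 * real N powr (-1/3) + 4 * \<epsilon>"
proof -
  interpret circ w N "m+1" Q
    by unfold_locales (use assms(1,2,4) in auto)
  have p: "Tm 0 0 = p_acc w Q 1" by (rule Tm00[OF assms(3)])
  have d: "\<bar>2 * Tm 0 0 - 1\<bar> \<le> 1/4" using assms(7,9,10) unfolding p abs_le_iff by linarith
  have b: "p_acc (R1_qubits w N (m + 1)) (R1 w N (m + 1) Q) 1 \<le> sqrt (5 * real N / 6) / real N"
    using main_bound[OF assms(3) d] unfolding n_def .
  have N1: "real N \<ge> 1" using assms(5) by simp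
  have "sqrt (5 * real N / 6) / real N < real N powr (-1/3)" by (rule final_real[OF N1])
  also have "\<dots> \<le> 3 * real N powr (-1/3) + 4 * \<epsilon>" using assms(6) by simp
  finally show ?thesis using b by linarith
qed


end
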